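(* Assume that for every $t$ the local noises $w^1_t,\ldots,w^n_t$ are exchangeable, and let $c_{\max}$ be an upper bound on the per-step cost $c$. Given $\varepsilon>0$, let $k=k(\varepsilon)\in\mathbb{N}$ satisfy $k\ge \log\!\big(\tfrac{(1-\gamma)\varepsilon}{2c_{\max}}\big)/\log(\gamma)$. Fix an arbitrary $m^\ast\in\mathcal{M}(n)$ and let $\tilde V_k:\mathcal{M}(n)\times\{0,1,\ldots,k\}\to\mathbb{R}$ be any solution of $\tilde V_k(x,y)=\min(\tilde V^0_k(x,y),\tilde V^1_k(x,y))$, where $$\tilde V^0_k(x,y)=\sum_{m\in\mathcal{M}(n)}c\big(m,h(T_{\mathsf m}^y(\cdot,x)),0\big)T_{\mathsf m}^y(m,x)+\gamma\big(\mathbb{1}\{y<k\}\tilde V_k(x,y+1)+\mathbb{1}\{y=k\}\tilde V_k(m^\ast,0)\big),$$ $$\tilde V^1_k(x,y)=\sum_{m\in\mathcal{M}(n)}c\big(m,h(T_{\mathsf m}^y(\cdot,x)),1\big)T_{\mathsf m}^y(m,x)+(1-q)\gamma\big(\mathbb{1}\{y<k\}\tilde V_k(x,y+1)+\mathbb{1}\{y=k\}\tilde V_k(m^\ast,0)\big)+q\gamma\sum_{m'\in\mathcal{M}(n)}T_{\mathsf m}^{y+1}(m',x)\tilde V_k(m',0).$$ Then the strategy $g^\ast_\varepsilon(x,y)=0$ if $\tilde V^0_k(x,y)\le\tilde V^1_k(x,y)$ and $g^\ast_\varepsilon(x,y)=1$ otherwise (applied to $(x_t,y_t)$) is $\varepsilon$-optimal: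 $J(g^\ast_\varepsilon)\le J(g)+\varepsilon$ for every strategy $g$.
   Context: Setting: $n\in\mathbb{N}$ nodes, finite state set $\mathcal{S}\subset\mathbb{R}$, finite noise set $\mathcal{W}\subset\mathbb{R}$, time $t\in\mathbb{N}=\{1,2,\ldots\}$. Node $i$ has state $s^i_t\in\mathcal{S}$; the empirical distribution is $m_t(s)=\frac1n\sum_{i=1}^n\mathbb{1}\{s^i_t=s\}$, taking values in $\mathcal{M}(n)$, the set of probability vectors on $\mathcal{S}$ with entries in $\{0,\frac1n,\ldots,1\}$. States evolve as $s^i_{t+1}=f(s^i_t,m_t,w^i_t)$ with local noise $w^i_t\in\mathcal{W}$. A decision maker picks $a_t\in\{0,1\}$ ($1$ = collect data). Observations $o_t\in\mathcal{O}=\mathcal{M}(n)\cup\{\mathtt{blank}\}$: $o_1=m_1$; if $a_t=0$ then $o_{t+1}=\mathtt{blank}$; if $a_t=1$ then $o_{t+1}=m_{t+1}$ with probability $q\in[0,1]$ and $o_{t+1}=\mathtt{blank}$ with probability $1-q$. A strategy is $g=(g_1,g_2,\ldots)$, $a_t=g_t(o_{1:t},a_{1:t-1})$. Initial states, noise vectors, and the Bernoulli($q$) credibility variables are mutually independent with finite variances. The estimate is $\hat m_t=h(\mathbb{P}(m_t\mid o_{1:t},a_{1:t-1}))\in\mathcal{M}(n)$ for a fixed function $h$. Per-step cost $c:\mathcal{M}(n)^2\times\{0,1\}\to\mathbb{R}_{\ge0}$ at $(m_t,\hat m_t,a_t)$; discount $\gamma\in(0,1)$; $J(g)=\mathbb{E}^g[\sum_{t=1}^\infty\gamma^{t-1}c(m_t,\hat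 m_t,a_t)]$. Under exchangeable noises $m_t$ is a time-homogeneous Markov chain with transition matrix $T_{\mathsf m}(m',m)=\mathbb{P}(m_{t+1}=m'\mid m_t=m)$; $T_{\mathsf m}^y$ is its $y$-th power. $x_t$ is the last non-blank observation up to time $t$ and $y_t$ the number of blank observations since then, $(x_1,y_1)=(m_1,0)$. *)

theory Defs
  imports "HOL-Probability.Probability"
begin

definition emp :: "nat \<Rightarrow> real list \<Rightarrow> (real \<Rightarrow> real)" where
  "emp n s = (\<lambda>x. real (card {i. i < n \<and> s ! i = x}) / real n)"

(* M(n): probability vectors on S with entries in {0,1/n,...,1}; represented as
   functions real => real vanishing outside S *)
definition Mset :: "nat \<Rightarrow> real set \<Rightarrow> (real \<Rightarrow> real) set" where
  "Mset n S = {m. (\<forall>x. x \<notin> S \<longrightarrow> m x = 0) \<and>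
                  (\<forall>x\<in>S. \<exists>j\<le>n. m x = real j / real n) \<and>
                  (\<Sum>x\<in>S. m x) = 1}"

definition is_belief :: "nat \<Rightarrow> real set \<Rightarrow> ((real \<Rightarrow> real) \<Rightarrow> real) \<Rightarrow> bool" where
  "is_belief n S b \<longleftrightarrow> (\<forall>m. 0 \<le> b m) \<and> (\<forall>m. m \<notin> Mset n S \<longrightarrow> b m = 0) \<and>
                         (\<Sum>m\<in>Mset n S. b m) = 1"

(* T_m(m', m) = P(m_{t+1} = m' | m_t = m), computed from any state vector
   with empirical distribution m (well defined under exchangeable noises) *)
definition Tm :: "nat \<Rightarrow> real set \<Rightarrow> (real \<Rightarrow> (real \<Rightarrow> real) \<Rightarrow> real \<Rightarrow> real) \<Rightarrow>
                  real list pmf \<Rightarrow> (real \<Rightarrow> real) \<Rightarrow> (real \<Rightarrow> real) \<Rightarrow> real" where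
  "Tm n S f PW m' m =
     (let s = (SOME s. length s = n \<and> set s \<subseteq> S \<and> emp n s = m)
      in measure_pmf.prob PW {w. emp n (map (\<lambda>i. f (s ! i) m (w ! i)) [0..<n]) = m'})"

fun Tpow :: "nat \<Rightarrow> real set \<Rightarrow> (real \<Rightarrow> (real \<Rightarrow> real) \<Rightarrow> real \<Rightarrow> real) \<Rightarrow>
             real list pmf \<Rightarrow> nat \<Rightarrow> (real \<Rightarrow> real) \<Rightarrow> (real \<Rightarrow> real) \<Rightarrow> real" where
  "Tpow n S f PW 0 m' x = (if m' = x then 1 else 0)"
| "Tpow n S f PW (Suc y) m' x =
     (\<Sum>m''\<in>Mset n S. Tm n S f PW m' m'' * Tpow n S f PW y m'' x)"

fun rep_pmf :: "nat \<Rightarrow> 'a pmf \<Rightarrow> 'a list pmf" where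
  "rep_pmf 0 p = return_pmf []"
| "rep_pmf (Suc k) p = bind_pmf p (\<lambda>x. map_pmf (\<lambda>xs. x # xs) (rep_pmf k p))"

(* outcome (s_1, [w_1,...,w_j], [b_1,...,b_j]): initial state vector, noise vectors,
   Bernoulli(q) credibility variables (b_t decides whether o_{t+1} is non-blank
   when a_t = 1); all mutually independent *)
type_synonym outcome = "real list \<times> real list list \<times> bool list"

definition prefix_pmf :: "real list pmf \<Rightarrow> real list pmf \<Rightarrow> real \<Rightarrow> nat \<Rightarrow> outcome pmf" where
  "prefix_pmf P0 PW q j = pair_pmf P0 (pair_pmf (rep_pmf j PW) (rep_pmf j (bernoulli_pmf q)))"

(* state vector s_{j+1} (0-indexed j) *)
fun state_at :: "nat \<Rightarrow> (real \<Rightarrow> (real \<Rightarrow> real) \<Rightarrow> real \<Rightarrow> real) \<Rightarrow> outcome \<Rightarrow> nat \<Rightarrow> real list" where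
  "state_at n f \<omega> 0 = fst \<omega>"
| "state_at n f \<omega> (Suc j) =
     (let s = state_at n f \<omega> j
      in map (\<lambda>i. f (s ! i) (emp n s) (fst (snd \<omega>) ! j ! i)) [0..<n])"

(* m_{j+1} *)
definition mf :: "nat \<Rightarrow> (real \<Rightarrow> (real \<Rightarrow> real) \<Rightarrow> real \<Rightarrow> real) \<Rightarrow> outcome \<Rightarrow> nat \<Rightarrow> (real \<Rightarrow> real)" where
  "mf n f \<omega> j = emp n (state_at n f \<omega> j)"

type_synonym obs = "(real \<Rightarrow> real) option"   (* None = blank *)

(* strategy: g t o_{1:t} a_{1:t-1} = a_t *)
type_synonym strategy = "nat \<Rightarrow> obs list \<Rightarrow> nat list \<Rightarrow> nat"

definition strategies :: "strategy set" where
  "strategies = {g. \<forall>t os as. g t os as \<in> {0, 1}}"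

(* run ... j = ([o_1,...,o_{j+1}], [a_1,...,a_{j+1}]) *)
fun run :: "nat \<Rightarrow> (real \<Rightarrow> (real \<Rightarrow> real) \<Rightarrow> real \<Rightarrow> real) \<Rightarrow> strategy \<Rightarrow> outcome \<Rightarrow> nat \<Rightarrow>
            obs list \<times> nat list" where
  "run n f g \<omega> 0 = ([Some (mf n f \<omega> 0)], [g 1 [Some (mf n f \<omega> 0)] []])"
| "run n f g \<omega> (Suc j) =
     (let (os, as) = run n f g \<omega> j;
          o' = (if last as = 1 \<and> snd (snd \<omega>) ! j then Some (mf n f \<omega> (Suc j)) else None);
          os' = os @ [o']
      in (os', as @ [g (j + 2) os' as]))"

(* P(m_{j+1} = . | o_{1:j+1} = os, a_{1:j} = as) *)
definition belief :: "nat \<Rightarrow> (real \<Rightarrow> (real \<Rightarrow> real) \<Rightarrow> real \<Rightarrow> real) \<Rightarrow> real list pmf \<Rightarrow>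
    real list pmf \<Rightarrow> real \<Rightarrow> strategy \<Rightarrow> nat \<Rightarrow> obs list \<Rightarrow> nat list \<Rightarrow> ((real \<Rightarrow> real) \<Rightarrow> real)" where
  "belief n f P0 PW q g j os as =
     (\<lambda>m. measure_pmf.prob (prefix_pmf P0 PW q j)
            {\<omega>. mf n f \<omega> j = m \<and> fst (run n f g \<omega> j) = os \<and> butlast (snd (run n f g \<omega> j)) = as}
         / measure_pmf.prob (prefix_pmf P0 PW q j)
            {\<omega>. fst (run n f g \<omega> j) = os \<and> butlast (snd (run n f g \<omega> j)) = as})"

(* E[c(m_t, \<hat>m_t, a_t)] for t = j+1 *)
definition exp_cost :: "nat \<Rightarrow> (real \<Rightarrow> (real \<Rightarrow> real) \<Rightarrow> real \<Rightarrow> real) \<Rightarrow> real list pmf \<Rightarrow>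
    real list pmf \<Rightarrow> real \<Rightarrow> (((real \<Rightarrow> real) \<Rightarrow> real) \<Rightarrow> (real \<Rightarrow> real)) \<Rightarrow>
    ((real \<Rightarrow> real) \<Rightarrow> (real \<Rightarrow> real) \<Rightarrow> nat \<Rightarrow> real) \<Rightarrow> strategy \<Rightarrow> nat \<Rightarrow> real" where
  "exp_cost n f P0 PW q h c g j =
     measure_pmf.expectation (prefix_pmf P0 PW q j)
       (\<lambda>\<omega>. let (os, as) = run n f g \<omega> j
             in c (mf n f \<omega> j) (h (belief n f P0 PW q g j os (butlast as))) (last as))"

(* J(g) = E[sum_t gamma^{t-1} c(m_t, \<hat>m_t, a_t)] = sum_t gamma^{t-1} E[c(...)] *)
definition Jcost :: "nat \<Rightarrow> (real \<Rightarrow> (real \<Rightarrow> real) \<Rightarrow> real \<Rightarrow> real) \<Rightarrow> real list pmf \<Rightarrow>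
    real list pmf \<Rightarrow> real \<Rightarrow> (((real \<Rightarrow> real) \<Rightarrow> real) \<Rightarrow> (real \<Rightarrow> real)) \<Rightarrow>
    ((real \<Rightarrow> real) \<Rightarrow> (real \<Rightarrow> real) \<Rightarrow> nat \<Rightarrow> real) \<Rightarrow> real \<Rightarrow> strategy \<Rightarrow> real" where
  "Jcost n f P0 PW q h c \<gamma> g = (\<Sum>j. \<gamma> ^ j * exp_cost n f P0 PW q h c g j)"

definition xof :: "obs list \<Rightarrow> (real \<Rightarrow> real)" where
  "xof os = the (last (filter (\<lambda>ob. ob \<noteq> None) os))"

definition yof :: "obs list \<Rightarrow> nat" where
  "yof os = length (takeWhile (\<lambda>ob. ob = None) (rev os))"

definition V0 :: "nat \<Rightarrow> real set \<Rightarrow> (real \<Rightarrow> (real \<Rightarrow> real) \<Rightarrow> real \<Rightarrow> real) \<Rightarrow> real list pmf \<Rightarrow>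
    (((real \<Rightarrow> real) \<Rightarrow> real) \<Rightarrow> (real \<Rightarrow> real)) \<Rightarrow>
    ((real \<Rightarrow> real) \<Rightarrow> (real \<Rightarrow> real) \<Rightarrow> nat \<Rightarrow> real) \<Rightarrow> real \<Rightarrow> nat \<Rightarrow> (real \<Rightarrow> real) \<Rightarrow>
    ((real \<Rightarrow> real) \<Rightarrow> nat \<Rightarrow> real) \<Rightarrow> (real \<Rightarrow> real) \<Rightarrow> nat \<Rightarrow> real" where
  "V0 n S f PW h c \<gamma> k mstar V x y =
     (\<Sum>m\<in>Mset n S. c m (h (\<lambda>m'. Tpow n S f PW y m' x)) 0 * Tpow n S f PW y m x)
     + \<gamma> * ((if y < k then 1 else 0) * V x (y + 1) + (if y = k then 1 else 0) * V mstar 0)"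

definition V1 :: "nat \<Rightarrow> real set \<Rightarrow> (real \<Rightarrow> (real \<Rightarrow> real) \<Rightarrow> real \<Rightarrow> real) \<Rightarrow> real list pmf \<Rightarrow>
    (((real \<Rightarrow> real) \<Rightarrow> real) \<Rightarrow> (real \<Rightarrow> real)) \<Rightarrow>
    ((real \<Rightarrow> real) \<Rightarrow> (real \<Rightarrow> real) \<Rightarrow> nat \<Rightarrow> real) \<Rightarrow> real \<Rightarrow> real \<Rightarrow> nat \<Rightarrow> (real \<Rightarrow> real) \<Rightarrow>
    ((real \<Rightarrow> real) \<Rightarrow> nat \<Rightarrow> real) \<Rightarrow> (real \<Rightarrow> real) \<Rightarrow> nat \<Rightarrow> real" where
  "V1 n S f PW h c \<gamma> q k mstar V x y =
     (\<Sum>m\<in>Mset n S. c m (h (\<lambda>m'. Tpow n S f PW y m' x)) 1 * Tpow n S f PW y m x)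
     + (1 - q) * \<gamma> * ((if y < k then 1 else 0) * V x (y + 1) + (if y = k then 1 else 0) * V mstar 0)
     + q * \<gamma> * (\<Sum>m'\<in>Mset n S. Tpow n S f PW (y + 1) m' x * V m' 0)"

end

theory Submission
  imports Defs "HOL-Combinatorics.Permutations"
begin

definition ind :: "bool \<Rightarrow> real" where "ind b = (if b then 1 else 0)"

locale sys =
  fixes n :: nat and S W :: "real set" and f :: "real \<Rightarrow> (real \<Rightarrow> real) \<Rightarrow> real \<Rightarrow> real"
    and P0 PW :: "real list pmf" and q :: real
  assumes n_pos: "n \<ge> 1"
    and S_fin: "finite S" and W_fin: "finite W"
    and f_range: "\<And>s m w. s \<in> S \<Longrightarrow> m \<in> Mset n S \<Longrightarrow> w \<in> W \<Longrightarrow> f s m w \<in> S"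
    and P0_supp: "set_pmf P0 \<subseteq> {s. length s = n \<and> set s \<subseteq> S}"
    and PW_supp: "set_pmf PW \<subseteq> {w. length w = n \<and> set w \<subseteq> W}"
    and exchangeable: "\<And>\<pi>. \<pi> permutes {..<n} \<Longrightarrow>
                         map_pmf (\<lambda>w. map (\<lambda>i. w ! \<pi> i) [0..<n]) PW = PW"
    and q_range: "0 \<le> q" "q \<le> 1"
begin

abbreviation "MM \<equiv> Mset n S"

definition valid :: "real list \<Rightarrow> bool" where "valid s \<longleftrightarrow> length s = n \<and> set s \<subseteq> S"

definition nxt :: "real list \<Rightarrow> real list \<Rightarrow> real list" where
  "nxt s w = map (\<lambda>i. f (s!i) (emp n s) (w!i)) [0..<n]"

lemma card_count: "card {i. i < length s \<and> s ! i = x} = count (mset s) x"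
  by (simp add: count_mset count_list_eq_length_filter length_filter_conv_card eq_commute)

lemma emp_count: "length s = n \<Longrightarrow> emp n s x = real (count (mset s) x) / real n"
  using card_count[of s x] by (simp add: emp_def)

lemma emp_Mset: assumes "valid s" shows "emp n s \<in> MM"
proof -
  have len: "length s = n" and sub: "set s \<subseteq> S" using assms by (auto simp: valid_def)
  have a: "\<forall>x. x \<notin> S \<longrightarrow> emp n s x = 0"
    using sub by (auto simp: emp_count[OF len] count_mset_0_iff)
  have b: "\<forall>x\<in>S. \<exists>j\<le>n. emp n s x = real j / real n"
  proof
    fix x assume "x \<in> S"
    have "count (mset s) x \<le> n"
      using len by (simp add: count_mset count_list_eq_length_filter)
        (metis length_filter_le)
    then show "\<exists>j\<le>n. emp n s x = real j / real n" using emp_count[OF len] by blast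
  qed
  have "(\<Sum>x\<in>S. emp n s x) = (\<Sum>x\<in>S. real (count_list s x)) / real n"
    by (simp add: emp_count[OF len] count_mset sum_divide_distrib)
  also have "(\<Sum>x\<in>S. real (count_list s x)) = real n"
    using sum_count_set[OF sub S_fin] len by (metis of_nat_sum)
  finally have c: "(\<Sum>x\<in>S. emp n s x) = 1" using n_pos by simp
  show ?thesis using a b c by (simp add: Mset_def)
qed

lemma Mset_fin: "finite MM"
proof -
  let ?B = "(\<lambda>j. real j / real n) ` {..n}"
  have "MM \<subseteq> {m. \<forall>x. (x \<in> S \<longrightarrow> m x \<in> ?B) \<and> (x \<notin> S \<longrightarrow> m x = 0)}"
    by (auto simp: Mset_def)
  moreover have "finite {m. \<forall>x. (x \<in> S \<longrightarrow> m x \<in> ?B) \<and> (x \<notin> S \<longrightarrow> m x = 0)}"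
    by (rule finite_set_of_finite_funs) (auto simp: S_fin)
  ultimately show ?thesis by (rule finite_subset)
qed

lemma realize: assumes "m \<in> MM" shows "\<exists>s. valid s \<and> emp n s = m"
proof -
  have m0: "\<And>x. x \<notin> S \<Longrightarrow> m x = 0" and mj: "\<And>x. x \<in> S \<Longrightarrow> \<exists>j\<le>n. m x = real j / real n"
    and ms: "(\<Sum>x\<in>S. m x) = 1" using assms by (auto simp: Mset_def)
  define cnt where "cnt x = nat \<lfloor>m x * real n\<rfloor>" for x
  have cnt: "real (cnt x) = m x * real n" if xS: "x \<in> S" for x
  proof -
    obtain j where "m x = real j / real n" using mj[OF xS] by blast
    then show ?thesis using n_pos by (simp add: cnt_def)
  qed
  define A where "A = (\<Sum>x\<in>S. replicate_mset (cnt x) x)"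
  have cA: "count A y = (if y \<in> S then cnt y else 0)" for y
    by (simp add: A_def count_sum S_fin)
  obtain s where s: "mset s = A" using ex_mset by blast
  have sub: "set s \<subseteq> S"
  proof
    fix x assume "x \<in> set s"
    then have "count (mset s) x > 0" by simp
    then show "x \<in> S" using s cA by (auto split: if_splits)
  qed
  have "real (length s) = (\<Sum>x\<in>S. real (count_list s x))"
    using sum_count_set[OF sub S_fin] by (metis of_nat_sum)
  also have "\<dots> = (\<Sum>x\<in>S. m x * real n)"
    by (rule sum.cong) (auto simp: count_mset[symmetric] s cA cnt)
  also have "\<dots> = real n" using ms by (simp add: sum_distrib_right[symmetric])
  finally have len: "length s = n" by simp
  have "emp n s = m"
  proof
    fix x show "emp n s x = m x"
    proof (cases "x \<in> S")
      case True then show ?thesis using n_pos by (simp add: emp_count[OF len] s cA cnt)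
    next
      case False then show ?thesis by (simp add: emp_count[OF len] s cA m0)
    qed
  qed
  then show ?thesis using len sub by (auto simp: valid_def)
qed

lemma emp_eq_mset: assumes "length s = n" "length s' = n" "emp n s = emp n s'"
  shows "mset s = mset s'"
proof (rule multiset_eqI)
  fix x
  have "emp n s x = emp n s' x" using assms by simp
  then have "real (count (mset s) x) / real n = real (count (mset s') x) / real n"
    by (simp add: emp_count assms(1,2))
  then show "count (mset s) x = count (mset s') x"
    using n_pos by (simp add: divide_cancel_right)
qed

lemma emp_perm: assumes "p permutes {..<n}" "length u = n"
  shows "emp n (permute_list p u) = emp n u"
proof -
  have "mset (permute_list p u) = mset u" using assms by (simp add: mset_permute_list)
  moreover have "length (permute_list p u) = n" using assms by simp
  ultimately show ?thesis using assms emp_count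
    by (metis ext)
qed

end

lemma prob_ind: "measure_pmf.prob N A = (\<integral>x. ind (x \<in> A) \<partial>N)"
proof -
  have "(\<lambda>x. ind (x \<in> A)) = indicator A" by (auto simp: ind_def indicator_def)
  then show ?thesis by (simp add: integral_indicator)
qed

lemma ind_simps[simp]: "ind True = 1" "ind False = 0" "ind b \<ge> 0" "ind b \<le> 1"
  by (auto simp: ind_def)

lemma int_decomp:
  assumes "finite A" "\<And>x. x \<in> set_pmf N \<Longrightarrow> X x \<in> A" "finite (set_pmf N)"
  shows "(\<integral>x. G x \<partial>N) = (\<Sum>v\<in>A. \<integral>x. G x * ind (X x = v) \<partial>N)"
proof -
  have "(\<integral>x. G x \<partial>N) = (\<integral>x. (\<Sum>v\<in>A. G x * ind (X x = v)) \<partial>N)"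
  proof (rule integral_cong_AE)
    show "AE x in measure_pmf N. G x = (\<Sum>v\<in>A. G x * ind (X x = v))"
    proof (rule AE_pmfI)
      fix x assume "x \<in> set_pmf N"
      then have "X x \<in> A" by (rule assms(2))
      then show "G x = (\<Sum>v\<in>A. G x * ind (X x = v))"
        using assms(1) by (simp add: ind_def if_distrib sum.delta cong: if_cong)
    qed
  qed auto
  also have "\<dots> = (\<Sum>v\<in>A. \<integral>x. G x * ind (X x = v) \<partial>N)"
    by (rule Bochner_Integration.integral_sum) (simp add: integrable_measure_pmf_finite assms(3))
  finally show ?thesis .
qed

lemma int_decomp2:
  assumes "finite A" "\<And>x. x \<in> set_pmf N \<Longrightarrow> X x \<in> A" "finite (set_pmf N)"
  shows "(\<integral>x. H (X x) \<partial>N) = (\<Sum>v\<in>A. H v * measure_pmf.prob N {x. X x = v})"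
proof -
  have "(\<integral>x. H (X x) \<partial>N) = (\<Sum>v\<in>A. \<integral>x. H (X x) * ind (X x = v) \<partial>N)"
    by (rule int_decomp[OF assms])
  also have "\<dots> = (\<Sum>v\<in>A. H v * measure_pmf.prob N {x. X x = v})"
  proof (rule sum.cong)
    fix v
    have "(\<lambda>x. H (X x) * ind (X x = v)) = (\<lambda>x. H v * ind (x \<in> {x. X x = v}))"
      by (auto simp: ind_def)
    then show "(\<integral>x. H (X x) * ind (X x = v) \<partial>N) = H v * measure_pmf.prob N {x. X x = v}"
      by (simp add: prob_ind)
  qed simp
  finally show ?thesis .
qed

context sys begin

lemma fin_lists: "finite A \<Longrightarrow> finite {w. length w = k \<and> set w \<subseteq> A}"
proof -
  assume "finite A"
  then have "finite {xs. set xs \<subseteq> A \<and> length xs = k}" by (rule finite_lists_length_eq)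
  moreover have "{w. length w = k \<and> set w \<subseteq> A} = {xs. set xs \<subseteq> A \<and> length xs = k}" by auto
  ultimately show ?thesis by simp
qed

lemma PW_fin: "finite (set_pmf PW)"
  by (rule finite_subset[OF PW_supp]) (rule fin_lists[OF W_fin])

lemma PW_valid: "w \<in> set_pmf PW \<Longrightarrow> length w = n \<and> set w \<subseteq> W"
  using PW_supp by auto

lemma nxt_valid: assumes "valid s" "w \<in> set_pmf PW" shows "valid (nxt s w)"
proof -
  have "emp n s \<in> MM" by (rule emp_Mset[OF assms(1)])
  moreover have "\<And>i. i < n \<Longrightarrow> s ! i \<in> S" using assms(1) by (auto simp: valid_def)
  moreover have "\<And>i. i < n \<Longrightarrow> w ! i \<in> W" using PW_valid[OF assms(2)] by auto
  ultimately show ?thesis by (auto simp: valid_def nxt_def intro!: f_range)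
qed

lemma exch:
  assumes "valid s"
  shows "measure_pmf.prob PW {w. emp n (nxt s w) = m'} = Tm n S f PW m' (emp n s)"
proof -
  define s' where "s' = (SOME s'. length s' = n \<and> set s' \<subseteq> S \<and> emp n s' = emp n s)"
  have "\<exists>s'. length s' = n \<and> set s' \<subseteq> S \<and> emp n s' = emp n s" using assms by (auto simp: valid_def)
  then have s': "length s' = n \<and> set s' \<subseteq> S \<and> emp n s' = emp n s"
    unfolding s'_def by (rule someI_ex)
  have len: "length s = n" using assms by (simp add: valid_def)
  have "mset s' = mset s" using emp_eq_mset s' len by metis
  then obtain p where p: "p permutes {..<length s}" "permute_list p s = s'"
    by (rule mset_eq_permutation)
  have pn: "p permutes {..<n}" using p len by simp
  have s'i: "s' ! i = s ! p i" if "i < n" for i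
    using p(2)[symmetric] permute_list_nth[OF p(1)] that len by simp
  define \<sigma> where "\<sigma> w = map (\<lambda>i. w ! inv p i) [0..<n]" for w :: "real list"
  have ex: "map_pmf \<sigma> PW = PW" unfolding \<sigma>_def by (rule exchangeable[OF permutes_inv[OF pn]])
  have key: "emp n (nxt s (\<sigma> w)) = emp n (map (\<lambda>i. f (s' ! i) (emp n s) (w ! i)) [0..<n])" for w
  proof -
    let ?u = "nxt s (\<sigma> w)"
    have lu: "length ?u = n" by (simp add: nxt_def)
    have "permute_list p ?u = map (\<lambda>i. f (s' ! i) (emp n s) (w ! i)) [0..<n]"
    proof (rule nth_equalityI)
      show "length (permute_list p ?u) = length (map (\<lambda>i. f (s' ! i) (emp n s) (w ! i)) [0..<n])"
        by (simp add: nxt_def)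
      fix i assume "i < length (permute_list p ?u)"
      then have i: "i < n" by (simp add: nxt_def)
      have pi: "p i < n" using permutes_in_image[OF pn] i by simp
      have "inv p (p i) = i" using permutes_inverses(2)[OF pn] by simp
      then show "permute_list p ?u ! i = map (\<lambda>i. f (s' ! i) (emp n s) (w ! i)) [0..<n] ! i"
        using permute_list_nth[of p ?u i] pn lu i pi s'i[OF i]
        by (simp add: nxt_def \<sigma>_def)
    qed
    then show ?thesis using emp_perm[OF pn lu] by simp
  qed
  have "measure_pmf.prob PW {w. emp n (nxt s w) = m'} =
        measure_pmf.prob (map_pmf \<sigma> PW) {w. emp n (nxt s w) = m'}" using ex by simp
  also have "\<dots> = measure_pmf.prob PW {w. emp n (nxt s (\<sigma> w)) = m'}"
    by (simp add: vimage_def)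
  also have "\<dots> = Tm n S f PW m' (emp n s)"
    unfolding Tm_def Let_def s'_def[symmetric] using key s' by simp
  finally show ?thesis .
qed

lemma exch_int:
  assumes "valid s"
  shows "(\<integral>w. H (emp n (nxt s w)) \<partial>PW) = (\<Sum>v\<in>MM. H v * Tm n S f PW v (emp n s))"
proof -
  have "(\<integral>w. H (emp n (nxt s w)) \<partial>PW) = (\<Sum>v\<in>MM. H v * measure_pmf.prob PW {w. emp n (nxt s w) = v})"
    by (rule int_decomp2[OF Mset_fin _ PW_fin]) (rule emp_Mset[OF nxt_valid[OF assms]])
  then show ?thesis by (simp add: exch[OF assms])
qed

lemma Tm_nonneg: "Tm n S f PW v m \<ge> 0"
  by (simp add: Tm_def Let_def)

lemma Tm_sum: assumes "m \<in> MM" shows "(\<Sum>v\<in>MM. Tm n S f PW v m) = 1"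
proof -
  obtain s where s: "valid s" "emp n s = m" using realize[OF assms] by blast
  have "(\<integral>w. 1 \<partial>PW) = (\<Sum>v\<in>MM. 1 * Tm n S f PW v (emp n s))"
    by (rule exch_int[OF s(1), where H="\<lambda>_. 1"])
  then show ?thesis using s by simp
qed

lemma Tm_out: assumes "m \<in> MM" "v \<notin> MM" shows "Tm n S f PW v m = 0"
proof -
  obtain s where s: "valid s" "emp n s = m" using realize[OF assms(1)] by blast
  have "(\<integral>w. ind (emp n (nxt s w) = v) \<partial>PW) = (\<Sum>u\<in>MM. ind (u = v) * Tm n S f PW u (emp n s))"
    by (rule exch_int[OF s(1)])
  also have "\<dots> = 0" using assms(2) by (auto intro!: sum.neutral simp: ind_def)
  finally have "(\<integral>w. ind (emp n (nxt s w) = v) \<partial>PW) = 0" .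
  then have "measure_pmf.prob PW {w. emp n (nxt s w) = v} = 0" by (simp add: prob_ind)
  then show ?thesis using exch[OF s(1)] s(2) by simp
qed

abbreviation T :: "nat \<Rightarrow> (real \<Rightarrow> real) \<Rightarrow> (real \<Rightarrow> real) \<Rightarrow> real" where
  "T y v x \<equiv> Tpow n S f PW y v x"

lemma T_nonneg: "T y v x \<ge> 0"
  by (induction y arbitrary: v) (auto intro!: sum_nonneg mult_nonneg_nonneg Tm_nonneg)

lemma T_out: assumes "x \<in> MM" "v \<notin> MM" shows "T y v x = 0"
  using assms by (cases y) (auto intro!: sum.neutral simp: Tm_out)

lemma T_sum: assumes "x \<in> MM" shows "(\<Sum>v\<in>MM. T y v x) = 1"
proof (induction y)
  case 0 then show ?case using assms Mset_fin by (simp add: sum.delta')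
next
  case (Suc y)
  have "(\<Sum>v\<in>MM. T (Suc y) v x) = (\<Sum>v\<in>MM. \<Sum>m\<in>MM. Tm n S f PW v m * T y m x)" by simp
  also have "\<dots> = (\<Sum>m\<in>MM. (\<Sum>v\<in>MM. Tm n S f PW v m) * T y m x)"
    by (subst sum.swap) (simp add: sum_distrib_right)
  also have "\<dots> = (\<Sum>m\<in>MM. T y m x)" by (rule sum.cong) (auto simp: Tm_sum)
  finally show ?case using Suc by simp
qed

lemma T_belief: assumes "x \<in> MM" shows "is_belief n S (\<lambda>v. T y v x)"
  using T_nonneg T_out[OF assms] T_sum[OF assms] by (auto simp: is_belief_def)

end

lemma set_rep: "set_pmf (rep_pmf k p) = {xs. length xs = k \<and> set xs \<subseteq> set_pmf p}"
proof (induction k)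
  case 0 then show ?case by auto
next
  case (Suc k)
  show ?case
  proof
    show "set_pmf (rep_pmf (Suc k) p) \<subseteq> {xs. length xs = Suc k \<and> set xs \<subseteq> set_pmf p}"
      using Suc by auto
    show "{xs. length xs = Suc k \<and> set xs \<subseteq> set_pmf p} \<subseteq> set_pmf (rep_pmf (Suc k) p)"
    proof
      fix xs assume "xs \<in> {xs. length xs = Suc k \<and> set xs \<subseteq> set_pmf p}"
      then obtain x xs' where "xs = x # xs'" "length xs' = k" "x \<in> set_pmf p" "set xs' \<subseteq> set_pmf p"
        by (cases xs) auto
      then show "xs \<in> set_pmf (rep_pmf (Suc k) p)" using Suc by auto
    qed
  qed
qed

lemma rep_snoc: "rep_pmf (Suc k) p = map_pmf (\<lambda>(xs, x). xs @ [x]) (pair_pmf (rep_pmf k p) p)"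
proof (induction k)
  case 0 then show ?case
    by (simp add: pair_pmf_def map_pmf_def bind_assoc_pmf bind_return_pmf)
next
  case (Suc k)
  have "rep_pmf (Suc (Suc k)) p = bind_pmf p (\<lambda>x. map_pmf ((#) x) (rep_pmf (Suc k) p))" by simp
  also have "\<dots> = bind_pmf p (\<lambda>x. map_pmf ((#) x) (map_pmf (\<lambda>(xs, x). xs @ [x]) (pair_pmf (rep_pmf k p) p)))"
    by (simp only: Suc)
  also have "\<dots> = map_pmf (\<lambda>(xs, x). xs @ [x]) (pair_pmf (rep_pmf (Suc k) p) p)"
    by (simp add: pair_pmf_def map_pmf_def bind_assoc_pmf bind_return_pmf)
  finally show ?case .
qed

definition glue :: "outcome \<Rightarrow> real list \<times> bool \<Rightarrow> outcome" where
  "glue \<omega> wb = (fst \<omega>, fst (snd \<omega>) @ [fst wb], snd (snd \<omega>) @ [snd wb])"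

lemma prefix_Suc: "prefix_pmf P0 PW q (Suc t) =
   map_pmf (\<lambda>(\<omega>, wb). glue \<omega> wb) (pair_pmf (prefix_pmf P0 PW q t) (pair_pmf PW (bernoulli_pmf q)))"
proof -
  have "prefix_pmf P0 PW q (Suc t) =
     bind_pmf P0 (\<lambda>s. bind_pmf (rep_pmf t PW) (\<lambda>ws. bind_pmf PW (\<lambda>w.
       bind_pmf (rep_pmf t (bernoulli_pmf q)) (\<lambda>bs. bind_pmf (bernoulli_pmf q) (\<lambda>b.
         return_pmf (s, ws @ [w], bs @ [b]))))))"
    unfolding prefix_pmf_def rep_snoc by (simp add: pair_pmf_def map_pmf_def bind_assoc_pmf bind_return_pmf)
  also have "\<dots> = bind_pmf P0 (\<lambda>s. bind_pmf (rep_pmf t PW) (\<lambda>ws.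
       bind_pmf (rep_pmf t (bernoulli_pmf q)) (\<lambda>bs. bind_pmf PW (\<lambda>w. bind_pmf (bernoulli_pmf q) (\<lambda>b.
         return_pmf (s, ws @ [w], bs @ [b]))))))"
    by (subst bind_commute_pmf[of PW]) (rule refl)
  also have "\<dots> = map_pmf (\<lambda>(\<omega>, wb). glue \<omega> wb) (pair_pmf (prefix_pmf P0 PW q t) (pair_pmf PW (bernoulli_pmf q)))"
    by (simp add: prefix_pmf_def glue_def pair_pmf_def map_pmf_def bind_assoc_pmf bind_return_pmf)
  finally show ?thesis .
qed

lemma int_pair:
  fixes f :: "'a \<times> 'b \<Rightarrow> real"
  assumes "finite (set_pmf A)" "finite (set_pmf B)"
  shows "(\<integral>z. f z \<partial>pair_pmf A B) = (\<integral>a. (\<integral>b. f (a, b) \<partial>B) \<partial>A)"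
proof -
  have "(\<integral>z. f z \<partial>pair_pmf A B) = (\<Sum>z\<in>set_pmf A \<times> set_pmf B. f z * pmf (pair_pmf A B) z)"
    by (rule integral_measure_pmf_real) (auto simp: assms)
  also have "\<dots> = (\<Sum>z\<in>set_pmf A \<times> set_pmf B. case z of (a, b) \<Rightarrow> f (a, b) * (pmf A a * pmf B b))"
    by (rule sum.cong) (auto simp: pmf_pair)
  also have "\<dots> = (\<Sum>a\<in>set_pmf A. \<Sum>b\<in>set_pmf B. f (a, b) * (pmf A a * pmf B b))"
    by (simp add: sum.cartesian_product)
  also have "\<dots> = (\<Sum>a\<in>set_pmf A. (\<Sum>b\<in>set_pmf B. f (a, b) * pmf B b) * pmf A a)"
    by (simp add: sum_distrib_left sum_distrib_right mult_ac)
  also have "\<dots> = (\<Sum>a\<in>set_pmf A. (\<integral>b. f (a, b) \<partial>B) * pmf A a)"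
    by (rule sum.cong[OF refl], subst integral_measure_pmf_real[where A="set_pmf B"]) (auto simp: assms)
  also have "\<dots> = (\<integral>a. (\<integral>b. f (a, b) \<partial>B) \<partial>A)"
    by (rule integral_measure_pmf_real[symmetric]) (auto simp: assms)
  finally show ?thesis .
qed

lemma int_bern:
  fixes F :: "bool \<Rightarrow> real"
  assumes "0 \<le> p" "p \<le> 1"
  shows "(\<integral>b. F b \<partial>bernoulli_pmf p) = p * F True + (1 - p) * F False"
proof -
  have "(\<integral>b. F b \<partial>bernoulli_pmf p) = (\<Sum>b\<in>UNIV. F b * pmf (bernoulli_pmf p) b)"
    by (rule integral_measure_pmf_real) auto
  then show ?thesis using assms by (simp add: UNIV_bool)
qed

definition obsv :: "obs list \<times> nat list \<Rightarrow> bool \<Rightarrow> (real \<Rightarrow> real) \<Rightarrow> obs" where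
  "obsv r b v = (if last (snd r) = 1 \<and> b then Some v else None)"

definition stepR :: "strategy \<Rightarrow> nat \<Rightarrow> obs list \<times> nat list \<Rightarrow> bool \<Rightarrow> (real \<Rightarrow> real) \<Rightarrow> obs list \<times> nat list" where
  "stepR g t r b v = (fst r @ [obsv r b v], snd r @ [g (t + 2) (fst r @ [obsv r b v]) (snd r)])"

lemma last_filt: "filter P xs \<noteq> [] \<Longrightarrow> last (filter P xs) \<in> set xs \<and> P (last (filter P xs))"
proof -
  assume "filter P xs \<noteq> []"
  then have "last (filter P xs) \<in> set (filter P xs)" by (rule last_in_set)
  then show ?thesis by simp
qed

context sys begin
lemma state_Suc: "state_at n f \<omega> (Suc j) = nxt (state_at n f \<omega> j) (fst (snd \<omega>) ! j)"
  by (simp add: nxt_def Let_def)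

lemma run_Suc: "run n f g \<omega> (Suc j) = stepR g j (run n f g \<omega> j) (snd (snd \<omega>) ! j) (mf n f \<omega> (Suc j))"
  by (simp add: stepR_def obsv_def Let_def split: prod.splits)

declare run.simps(2)[simp del] state_at.simps(2)[simp del]

lemma state_glue: assumes "length (fst (snd \<omega>)) = t" "i \<le> t"
  shows "state_at n f (glue \<omega> wb) i = state_at n f \<omega> i"
  using assms(2)
proof (induction i)
  case (Suc i)
  then show ?case using assms(1) by (simp add: state_Suc glue_def nth_append)
qed (simp add: glue_def)

lemma mf_glue: assumes "length (fst (snd \<omega>)) = t" "i \<le> t"
  shows "mf n f (glue \<omega> wb) i = mf n f \<omega> i"
  using state_glue[OF assms] by (simp add: mf_def)

lemma state_glue_Suc: assumes "length (fst (snd \<omega>)) = t"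
  shows "state_at n f (glue \<omega> wb) (Suc t) = nxt (state_at n f \<omega> t) (fst wb)"
  using state_glue[OF assms le_refl] assms by (simp add: state_Suc glue_def nth_append nxt_def)

lemma run_glue: assumes "length (fst (snd \<omega>)) = t" "length (snd (snd \<omega>)) = t" "i \<le> t"
  shows "run n f g (glue \<omega> wb) i = run n f g \<omega> i"
  using assms(3)
proof (induction i)
  case 0 then show ?case using mf_glue[OF assms(1), of 0] by simp
next
  case (Suc i)
  then show ?case using assms(1,2) mf_glue[OF assms(1) Suc.prems]
    by (simp add: run_Suc glue_def nth_append)
qed

lemma run_glue_Suc: assumes "length (fst (snd \<omega>)) = t" "length (snd (snd \<omega>)) = t"
  shows "run n f g (glue \<omega> wb) (Suc t) =
         stepR g t (run n f g \<omega> t) (snd wb) (emp n (nxt (state_at n f \<omega> t) (fst wb)))"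
  using run_glue[OF assms le_refl] state_glue_Suc[OF assms(1)] assms
  by (simp add: run_Suc mf_def glue_def nth_append)

lemma run_len: "length (fst (run n f g \<omega> t)) = Suc t \<and> length (snd (run n f g \<omega> t)) = Suc t"
  by (induction t) (auto simp: run_Suc stepR_def)

lemma run_hd: "fst (run n f g \<omega> t) ! 0 = Some (mf n f \<omega> 0)"
proof (induction t)
  case (Suc t) then show ?case using run_len[of g \<omega> t] by (simp add: run_Suc stepR_def nth_append)
qed simp

lemma run_last: "snd (run n f g \<omega> t) =
   butlast (snd (run n f g \<omega> t)) @ [g (Suc t) (fst (run n f g \<omega> t)) (butlast (snd (run n f g \<omega> t)))]"
  by (cases t) (auto simp: run_Suc stepR_def)

lemma run_set: "set (fst (run n f g \<omega> t)) \<subseteq> insert None ((\<lambda>j. Some (mf n f \<omega> j)) ` {..t})"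
proof (induction t)
  case (Suc t) then show ?case by (auto simp: run_Suc stepR_def obsv_def)
qed simp

lemma run_act: "g \<in> strategies \<Longrightarrow> last (snd (run n f g \<omega> t)) \<in> {0, 1}"
  by (cases t) (auto simp: run_Suc stepR_def strategies_def)


lemma P0_fin: "finite (set_pmf P0)"
  by (rule finite_subset[OF P0_supp]) (rule fin_lists[OF S_fin])

lemma prefix_set: "set_pmf (prefix_pmf P0 PW q t) =
   set_pmf P0 \<times> (set_pmf (rep_pmf t PW) \<times> set_pmf (rep_pmf t (bernoulli_pmf q)))"
  by (simp add: prefix_pmf_def)

lemma prefix_fin: "finite (set_pmf (prefix_pmf P0 PW q t))"
proof -
  have "finite (set_pmf (rep_pmf t PW))"
    unfolding set_rep by (rule fin_lists[OF PW_fin])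
  moreover have "finite (set_pmf (rep_pmf t (bernoulli_pmf q)))"
    unfolding set_rep by (rule fin_lists) simp
  ultimately show ?thesis by (simp add: prefix_set P0_fin)
qed

lemma prefix_supp: assumes "\<omega> \<in> set_pmf (prefix_pmf P0 PW q t)"
  shows "valid (fst \<omega>)" "length (fst (snd \<omega>)) = t" "length (snd (snd \<omega>)) = t"
    "\<And>j. j < t \<Longrightarrow> fst (snd \<omega>) ! j \<in> set_pmf PW"
proof -
  have "fst \<omega> \<in> set_pmf P0" using assms by (auto simp: prefix_set)
  then show "valid (fst \<omega>)" using P0_supp by (auto simp: valid_def)
  show "length (fst (snd \<omega>)) = t" "length (snd (snd \<omega>)) = t"
    "\<And>j. j < t \<Longrightarrow> fst (snd \<omega>) ! j \<in> set_pmf PW"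
    using assms by (auto simp: prefix_set set_rep)
qed

lemma state_valid: assumes "\<omega> \<in> set_pmf (prefix_pmf P0 PW q t)" "i \<le> t"
  shows "valid (state_at n f \<omega> i)"
  using assms(2)
proof (induction i)
  case 0 then show ?case using prefix_supp(1)[OF assms(1)] by simp
next
  case (Suc i) then show ?case using nxt_valid prefix_supp(4)[OF assms(1)] by (simp add: state_Suc)
qed

lemma mf_M: "\<omega> \<in> set_pmf (prefix_pmf P0 PW q t) \<Longrightarrow> i \<le> t \<Longrightarrow> mf n f \<omega> i \<in> MM"
  unfolding mf_def by (rule emp_Mset[OF state_valid])

lemma xof_M: assumes "\<omega> \<in> set_pmf (prefix_pmf P0 PW q t)"
  shows "xof (fst (run n f g \<omega> t)) \<in> MM"
proof -
  let ?os = "fst (run n f g \<omega> t)"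
  have "?os ! 0 = Some (mf n f \<omega> 0)" by (rule run_hd)
  moreover have "length ?os > 0" using run_len[of g \<omega> t] by simp
  ultimately have "Some (mf n f \<omega> 0) \<in> set ?os" by (metis nth_mem)
  then have ne: "filter (\<lambda>ob. ob \<noteq> None) ?os \<noteq> []" by (auto simp: filter_empty_conv)
  have l: "last (filter (\<lambda>ob. ob \<noteq> None) ?os) \<in> set ?os \<and>
    last (filter (\<lambda>ob. ob \<noteq> None) ?os) \<noteq> None" by (rule last_filt[OF ne])
  then obtain j where "j \<le> t" "last (filter (\<lambda>ob. ob \<noteq> None) ?os) = Some (mf n f \<omega> j)"
    using run_set[of g \<omega> t] by (metis (no_types, lifting) atMost_iff image_iff insertE subsetD)
  then show ?thesis using mf_M[OF assms] by (simp add: xof_def)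
qed

end

context sys begin

abbreviation pre :: "nat \<Rightarrow> outcome pmf" where "pre t \<equiv> prefix_pmf P0 PW q t"

lemma bern_fin: "finite (set_pmf (bernoulli_pmf q))"
  by (rule finite_subset[of _ UNIV]) auto

lemma int_Suc:
  fixes F :: "outcome \<Rightarrow> real"
  shows "(\<integral>\<omega>. F \<omega> \<partial>pre (Suc t)) =
     (\<integral>\<omega>. (\<integral>w. (\<integral>b. F (glue \<omega> (w, b)) \<partial>bernoulli_pmf q) \<partial>PW) \<partial>pre t)"
proof -
  have "(\<integral>\<omega>. F \<omega> \<partial>pre (Suc t)) =
     (\<integral>z. F (glue (fst z) (snd z)) \<partial>pair_pmf (pre t) (pair_pmf PW (bernoulli_pmf q)))"
    by (simp add: prefix_Suc case_prod_beta)
  also have "\<dots> = (\<integral>\<omega>. (\<integral>wb. F (glue \<omega> wb) \<partial>pair_pmf PW (bernoulli_pmf q)) \<partial>pre t)"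
    by (subst int_pair) (auto simp: prefix_fin PW_fin bern_fin)
  also have "\<dots> = (\<integral>\<omega>. (\<integral>w. (\<integral>b. F (glue \<omega> (w, b)) \<partial>bernoulli_pmf q) \<partial>PW) \<partial>pre t)"
    by (subst int_pair) (auto simp: PW_fin bern_fin)
  finally show ?thesis .
qed

lemma int_step:
  fixes F :: "obs list \<times> nat list \<Rightarrow> (real \<Rightarrow> real) \<Rightarrow> real"
  shows "(\<integral>\<omega>. F (run n f g \<omega> (Suc t)) (mf n f \<omega> (Suc t)) \<partial>pre (Suc t)) =
     (\<integral>\<omega>. (\<Sum>v\<in>MM. Tm n S f PW v (mf n f \<omega> t) *
         (q * F (stepR g t (run n f g \<omega> t) True v) v + (1 - q) * F (stepR g t (run n f g \<omega> t) False v) v)) \<partial>pre t)"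
proof -
  have "(\<integral>\<omega>. F (run n f g \<omega> (Suc t)) (mf n f \<omega> (Suc t)) \<partial>pre (Suc t)) =
     (\<integral>\<omega>. (\<integral>w. (\<integral>b. F (run n f g (glue \<omega> (w, b)) (Suc t)) (mf n f (glue \<omega> (w, b)) (Suc t))
        \<partial>bernoulli_pmf q) \<partial>PW) \<partial>pre t)" by (rule int_Suc)
  also have "\<dots> = (\<integral>\<omega>. (\<Sum>v\<in>MM. Tm n S f PW v (mf n f \<omega> t) *
         (q * F (stepR g t (run n f g \<omega> t) True v) v + (1 - q) * F (stepR g t (run n f g \<omega> t) False v) v)) \<partial>pre t)"
  proof (rule integral_cong_AE)
    show "AE \<omega> in measure_pmf (pre t).
      (\<integral>w. (\<integral>b. F (run n f g (glue \<omega> (w, b)) (Suc t)) (mf n f (glue \<omega> (w, b)) (Suc t)) \<partial>bernoulli_pmf q) \<partial>PW) =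
      (\<Sum>v\<in>MM. Tm n S f PW v (mf n f \<omega> t) *
         (q * F (stepR g t (run n f g \<omega> t) True v) v + (1 - q) * F (stepR g t (run n f g \<omega> t) False v) v))"
    proof (rule AE_pmfI)
      fix \<omega> assume \<omega>: "\<omega> \<in> set_pmf (pre t)"
      note l = prefix_supp(2,3)[OF \<omega>]
      let ?s = "state_at n f \<omega> t"
      let ?H = "\<lambda>v. q * F (stepR g t (run n f g \<omega> t) True v) v + (1 - q) * F (stepR g t (run n f g \<omega> t) False v) v"
      have "(\<integral>w. (\<integral>b. F (run n f g (glue \<omega> (w, b)) (Suc t)) (mf n f (glue \<omega> (w, b)) (Suc t)) \<partial>bernoulli_pmf q) \<partial>PW)
          = (\<integral>w. ?H (emp n (nxt ?s w)) \<partial>PW)"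
        using l q_range
        by (simp add: run_glue_Suc mf_def state_glue_Suc int_bern mult.commute)
      also have "\<dots> = (\<Sum>v\<in>MM. ?H v * Tm n S f PW v (emp n ?s))"
        by (rule exch_int[OF state_valid[OF \<omega> le_refl]])
      finally show "(\<integral>w. (\<integral>b. F (run n f g (glue \<omega> (w, b)) (Suc t)) (mf n f (glue \<omega> (w, b)) (Suc t)) \<partial>bernoulli_pmf q) \<partial>PW) =
        (\<Sum>v\<in>MM. Tm n S f PW v (mf n f \<omega> t) * ?H v)"
        by (simp add: mf_def mult.commute)
    qed
  qed auto
  finally show ?thesis .
qed

definition PH :: "strategy \<Rightarrow> nat \<Rightarrow> obs list \<times> nat list \<Rightarrow> real" where
  "PH g t hs = measure_pmf.prob (pre t) {\<omega>. run n f g \<omega> t = hs}"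

definition PMH :: "strategy \<Rightarrow> nat \<Rightarrow> obs list \<times> nat list \<Rightarrow> (real \<Rightarrow> real) \<Rightarrow> real" where
  "PMH g t hs m = measure_pmf.prob (pre t) {\<omega>. run n f g \<omega> t = hs \<and> mf n f \<omega> t = m}"

abbreviation xr :: "obs list \<times> nat list \<Rightarrow> real \<Rightarrow> real" where "xr r \<equiv> xof (fst r)"
abbreviation yr :: "obs list \<times> nat list \<Rightarrow> nat" where "yr r \<equiv> yof (fst r)"

definition Fprop :: "strategy \<Rightarrow> nat \<Rightarrow> bool" where
  "Fprop g t \<longleftrightarrow> (\<forall>hs m. PMH g t hs m = PH g t hs * T (yr hs) m (xr hs))"

lemma run_fin: "finite ((\<lambda>\<omega>. run n f g \<omega> t) ` set_pmf (pre t))"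
  using prefix_fin by simp

lemma int_run:
  fixes G :: "obs list \<times> nat list \<Rightarrow> real"
  shows "(\<integral>\<omega>. G (run n f g \<omega> t) \<partial>pre t) = (\<Sum>r\<in>(\<lambda>\<omega>. run n f g \<omega> t) ` set_pmf (pre t). G r * PH g t r)"
  unfolding PH_def by (rule int_decomp2[OF run_fin _ prefix_fin]) auto

lemma int_run_mf:
  fixes K :: "obs list \<times> nat list \<Rightarrow> (real \<Rightarrow> real) \<Rightarrow> real"
  shows "(\<integral>\<omega>. K (run n f g \<omega> t) (mf n f \<omega> t) \<partial>pre t) =
     (\<Sum>r\<in>(\<lambda>\<omega>. run n f g \<omega> t) ` set_pmf (pre t). \<Sum>m\<in>MM. K r m * PMH g t r m)"
proof -
  have "(\<integral>\<omega>. K (run n f g \<omega> t) (mf n f \<omega> t) \<partial>pre t) =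
       (\<integral>\<omega>. (case_prod K) (run n f g \<omega> t, mf n f \<omega> t) \<partial>pre t)" by simp
  also have "\<dots> = (\<Sum>z\<in>(\<lambda>\<omega>. run n f g \<omega> t) ` set_pmf (pre t) \<times> MM.
       (case_prod K) z * measure_pmf.prob (pre t) {\<omega>. (run n f g \<omega> t, mf n f \<omega> t) = z})"
    by (rule int_decomp2[OF finite_cartesian_product[OF run_fin Mset_fin] _ prefix_fin])
       (auto intro: mf_M)
  also have "\<dots> = (\<Sum>r\<in>(\<lambda>\<omega>. run n f g \<omega> t) ` set_pmf (pre t). \<Sum>m\<in>MM. K r m * PMH g t r m)"
    unfolding sum.cartesian_product PMH_def by (rule sum.cong) auto
  finally show ?thesis .
qed

lemma G_of_F:
  fixes K :: "obs list \<times> nat list \<Rightarrow> (real \<Rightarrow> real) \<Rightarrow> real"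
  assumes "Fprop g t"
  shows "(\<integral>\<omega>. K (run n f g \<omega> t) (mf n f \<omega> t) \<partial>pre t) =
     (\<integral>\<omega>. (\<Sum>m\<in>MM. T (yr (run n f g \<omega> t)) m (xr (run n f g \<omega> t)) * K (run n f g \<omega> t) m) \<partial>pre t)"
proof -
  have "(\<integral>\<omega>. K (run n f g \<omega> t) (mf n f \<omega> t) \<partial>pre t) =
     (\<Sum>r\<in>(\<lambda>\<omega>. run n f g \<omega> t) ` set_pmf (pre t). \<Sum>m\<in>MM. K r m * PMH g t r m)"
    by (rule int_run_mf)
  also have "\<dots> = (\<Sum>r\<in>(\<lambda>\<omega>. run n f g \<omega> t) ` set_pmf (pre t).
      (\<Sum>m\<in>MM. T (yr r) m (xr r) * K r m) * PH g t r)"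
  proof (rule sum.cong[OF refl])
    fix r
    have "\<And>m. PMH g t r m = PH g t r * T (yr r) m (xr r)" using assms unfolding Fprop_def by blast
    then show "(\<Sum>m\<in>MM. K r m * PMH g t r m) = (\<Sum>m\<in>MM. T (yr r) m (xr r) * K r m) * PH g t r"
      by (simp add: sum_distrib_left sum_distrib_right mult_ac)
  qed
  also have "\<dots> = (\<integral>\<omega>. (\<Sum>m\<in>MM. T (yr (run n f g \<omega> t)) m (xr (run n f g \<omega> t)) * K (run n f g \<omega> t) m) \<partial>pre t)"
    by (rule int_run[where G="\<lambda>r. \<Sum>m\<in>MM. T (yr r) m (xr r) * K r m", symmetric])
  finally show ?thesis .
qed

lemma T_swap: "(\<Sum>mm\<in>MM. T y mm x * (\<Sum>v\<in>MM. Tm n S f PW v mm * G v)) = (\<Sum>v\<in>MM. T (Suc y) v x * G v)"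
proof -
  have "(\<Sum>mm\<in>MM. T y mm x * (\<Sum>v\<in>MM. Tm n S f PW v mm * G v)) =
        (\<Sum>v\<in>MM. \<Sum>mm\<in>MM. Tm n S f PW v mm * T y mm x * G v)"
    by (subst sum.swap) (simp add: sum_distrib_left mult_ac)
  also have "\<dots> = (\<Sum>v\<in>MM. T (Suc y) v x * G v)"
    by (simp add: sum_distrib_right)
  finally show ?thesis .
qed

lemma stepG:
  fixes F :: "obs list \<times> nat list \<Rightarrow> (real \<Rightarrow> real) \<Rightarrow> real"
  assumes "Fprop g t"
  shows "(\<integral>\<omega>. F (run n f g \<omega> (Suc t)) (mf n f \<omega> (Suc t)) \<partial>pre (Suc t)) =
     (\<integral>\<omega>. (\<Sum>v\<in>MM. T (Suc (yr (run n f g \<omega> t))) v (xr (run n f g \<omega> t)) *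
         (q * F (stepR g t (run n f g \<omega> t) True v) v + (1 - q) * F (stepR g t (run n f g \<omega> t) False v) v)) \<partial>pre t)"
  unfolding int_step
  by (subst G_of_F[OF assms, where K="\<lambda>r mm. \<Sum>v\<in>MM. Tm n S f PW v mm *
         (q * F (stepR g t r True v) v + (1 - q) * F (stepR g t r False v) v)"]) (simp add: T_swap)

declare Tpow.simps(2)[simp del]

lemma yof_None[simp]: "yof (os @ [None]) = Suc (yof os)" by (simp add: yof_def)
lemma yof_Some[simp]: "yof (os @ [Some v]) = 0" by (simp add: yof_def)
lemma xof_None[simp]: "xof (os @ [None]) = xof os" by (simp add: xof_def)
lemma xof_Some[simp]: "xof (os @ [Some v]) = v" by (simp add: xof_def)

lemma F0: "Fprop g 0"
  unfolding Fprop_def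
proof (intro allI)
  fix hs m
  show "PMH g 0 hs m = PH g 0 hs * T (yr hs) m (xr hs)"
  proof (cases "\<exists>\<omega>. run n f g \<omega> 0 = hs")
    case True
    then obtain \<omega>0 where w0: "run n f g \<omega>0 0 = hs" by blast
    have y0: "yr hs = 0" using w0[symmetric] by (simp add: yof_def)
    have key: "run n f g \<omega> 0 = hs \<Longrightarrow> mf n f \<omega> 0 = xr hs" for \<omega>
      by (auto simp: xof_def)
    show ?thesis
    proof (cases "m = xr hs")
      case True
      then have "{\<omega>. run n f g \<omega> 0 = hs \<and> mf n f \<omega> 0 = m} = {\<omega>. run n f g \<omega> 0 = hs}"
        using key by auto
      then have e: "{\<omega>. run n f g \<omega> 0 = hs \<and> mf n f \<omega> 0 = m} = {\<omega>. run n f g \<omega> 0 = hs}" .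
      have "PMH g 0 hs m = PH g 0 hs" unfolding PMH_def PH_def e ..
      then show ?thesis using True y0 by simp
    next
      case False
      then have "{\<omega>. run n f g \<omega> 0 = hs \<and> mf n f \<omega> 0 = m} = {}"
        using key by auto
      then have e: "{\<omega>. run n f g \<omega> 0 = hs \<and> mf n f \<omega> 0 = m} = {}" .
      have "PMH g 0 hs m = 0" unfolding PMH_def e by simp
      then show ?thesis using False y0 by simp
    qed
  next
    case False
    then have e1: "{\<omega>. run n f g \<omega> 0 = hs \<and> mf n f \<omega> 0 = m} = {}"
      and e2: "{\<omega>. run n f g \<omega> 0 = hs} = {}" by auto
    show ?thesis unfolding PMH_def PH_def e1 e2 by simp
  qed
qed

lemma branch:
  assumes x: "xr r \<in> MM"
  shows "(\<Sum>v\<in>MM. T (Suc (yr r)) v (xr r) * ind (stepR g t r b v = hs' \<and> v = m)) =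
         T (yr hs') m (xr hs') * (\<Sum>v\<in>MM. T (Suc (yr r)) v (xr r) * ind (stepR g t r b v = hs'))"
proof (cases "last (snd r) = 1 \<and> b")
  case obs: True
  then have st: "stepR g t r b v = (fst r @ [Some v], snd r @ [g (t + 2) (fst r @ [Some v]) (snd r)])" for v
    by (simp add: stepR_def obsv_def)
  show ?thesis
  proof (cases "\<exists>v0\<in>MM. stepR g t r b v0 = hs'")
    case True
    then obtain v0 where v0: "v0 \<in> MM" "stepR g t r b v0 = hs'" by blast
    have iff: "stepR g t r b v = hs' \<longleftrightarrow> v = v0" for v
      using v0(2) st by auto
    have hx: "xr hs' = v0" "yr hs' = 0" using v0(2) st[of v0] by auto
    have "(\<Sum>v\<in>MM. T (Suc (yr r)) v (xr r) * ind (stepR g t r b v = hs' \<and> v = m)) =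
          (\<Sum>v\<in>MM. if v = v0 then (if m = v0 then T (Suc (yr r)) v0 (xr r) else 0) else 0)"
      by (rule sum.cong) (auto simp: iff ind_def)
    also have "\<dots> = (if m = v0 then T (Suc (yr r)) v0 (xr r) else 0)"
      using v0(1) Mset_fin by (simp add: sum.delta')
    also have "\<dots> = T (yr hs') m (xr hs') * (\<Sum>v\<in>MM. T (Suc (yr r)) v (xr r) * ind (stepR g t r b v = hs'))"
    proof -
      have "(\<Sum>v\<in>MM. T (Suc (yr r)) v (xr r) * ind (stepR g t r b v = hs')) =
            (\<Sum>v\<in>MM. if v = v0 then T (Suc (yr r)) v0 (xr r) else 0)"
        by (rule sum.cong) (auto simp: iff ind_def)
      also have "\<dots> = T (Suc (yr r)) v0 (xr r)" using v0(1) Mset_fin by (simp add: sum.delta')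
      finally show ?thesis using hx by simp
    qed
    finally show ?thesis .
  next
    case False
    then have "\<And>v. v \<in> MM \<Longrightarrow> stepR g t r b v \<noteq> hs'" by blast
    then show ?thesis by (simp add: ind_def)
  qed
next
  case nobs: False
  define s0 where "s0 = (fst r @ [None], snd r @ [g (t + 2) (fst r @ [None]) (snd r)])"
  have st: "stepR g t r b v = s0" for v using nobs by (simp add: stepR_def obsv_def s0_def)
  show ?thesis
  proof (cases "s0 = hs'")
    case True
    have hx: "xr hs' = xr r" "yr hs' = Suc (yr r)" using True[symmetric] by (auto simp: s0_def)
    have "(\<Sum>v\<in>MM. T (Suc (yr r)) v (xr r) * ind (stepR g t r b v = hs' \<and> v = m)) =
          (\<Sum>v\<in>MM. if v = m then T (Suc (yr r)) m (xr r) else 0)"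
      by (rule sum.cong) (auto simp: st True ind_def)
    also have "\<dots> = T (Suc (yr r)) m (xr r)"
      using Mset_fin T_out[OF x] by (simp add: sum.delta')
    also have "\<dots> = T (yr hs') m (xr hs') * (\<Sum>v\<in>MM. T (Suc (yr r)) v (xr r) * ind (stepR g t r b v = hs'))"
      using T_sum[OF x] hx by (simp add: st True)
    finally show ?thesis .
  next
    case False
    then show ?thesis by (simp add: st ind_def)
  qed
qed

lemma F_Suc: assumes "Fprop g t" shows "Fprop g (Suc t)"
  unfolding Fprop_def
proof (intro allI)
  fix hs' m
  let ?B = "\<lambda>r v. q * ind (stepR g t r True v = hs') + (1 - q) * ind (stepR g t r False v = hs')"
  have "PMH g (Suc t) hs' m = (\<integral>\<omega>. ind (run n f g \<omega> (Suc t) = hs' \<and> mf n f \<omega> (Suc t) = m) \<partial>pre (Suc t))"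
    by (simp add: PMH_def prob_ind)
  also have "\<dots> = (\<integral>\<omega>. (\<Sum>v\<in>MM. T (Suc (yr (run n f g \<omega> t))) v (xr (run n f g \<omega> t)) *
         (q * ind (stepR g t (run n f g \<omega> t) True v = hs' \<and> v = m) +
          (1 - q) * ind (stepR g t (run n f g \<omega> t) False v = hs' \<and> v = m))) \<partial>pre t)"
    by (rule stepG[OF assms, where F="\<lambda>r v. ind (r = hs' \<and> v = m)"])
  also have "\<dots> = (\<integral>\<omega>. T (yr hs') m (xr hs') * (\<Sum>v\<in>MM. T (Suc (yr (run n f g \<omega> t))) v (xr (run n f g \<omega> t)) *
         ?B (run n f g \<omega> t) v) \<partial>pre t)"
  proof (rule integral_cong_AE)
    show "AE \<omega> in measure_pmf (pre t). (\<Sum>v\<in>MM. T (Suc (yr (run n f g \<omega> t))) v (xr (run n f g \<omega> t)) *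
         (q * ind (stepR g t (run n f g \<omega> t) True v = hs' \<and> v = m) +
          (1 - q) * ind (stepR g t (run n f g \<omega> t) False v = hs' \<and> v = m))) =
       T (yr hs') m (xr hs') * (\<Sum>v\<in>MM. T (Suc (yr (run n f g \<omega> t))) v (xr (run n f g \<omega> t)) *
         ?B (run n f g \<omega> t) v)"
    proof (rule AE_pmfI)
      fix \<omega> assume \<omega>: "\<omega> \<in> set_pmf (pre t)"
      let ?r = "run n f g \<omega> t"
      have x: "xr ?r \<in> MM" by (rule xof_M[OF \<omega>])
      have "(\<Sum>v\<in>MM. T (Suc (yr ?r)) v (xr ?r) *
         (q * ind (stepR g t ?r True v = hs' \<and> v = m) + (1 - q) * ind (stepR g t ?r False v = hs' \<and> v = m))) =
         q * (\<Sum>v\<in>MM. T (Suc (yr ?r)) v (xr ?r) * ind (stepR g t ?r True v = hs' \<and> v = m)) +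
         (1 - q) * (\<Sum>v\<in>MM. T (Suc (yr ?r)) v (xr ?r) * ind (stepR g t ?r False v = hs' \<and> v = m))"
        by (simp add: sum.distrib sum_distrib_left sum_subtractf algebra_simps)
      also have "\<dots> = T (yr hs') m (xr hs') * (q * (\<Sum>v\<in>MM. T (Suc (yr ?r)) v (xr ?r) * ind (stepR g t ?r True v = hs')) +
         (1 - q) * (\<Sum>v\<in>MM. T (Suc (yr ?r)) v (xr ?r) * ind (stepR g t ?r False v = hs')))"
        unfolding branch[OF x] by (simp add: algebra_simps)
      also have "\<dots> = T (yr hs') m (xr hs') * (\<Sum>v\<in>MM. T (Suc (yr ?r)) v (xr ?r) * ?B ?r v)"
        by (simp add: sum.distrib sum_distrib_left sum_subtractf algebra_simps)
      finally show "(\<Sum>v\<in>MM. T (Suc (yr ?r)) v (xr ?r) *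
         (q * ind (stepR g t ?r True v = hs' \<and> v = m) + (1 - q) * ind (stepR g t ?r False v = hs' \<and> v = m))) =
         T (yr hs') m (xr hs') * (\<Sum>v\<in>MM. T (Suc (yr ?r)) v (xr ?r) * ?B ?r v)" .
    qed
  qed auto
  also have "\<dots> = T (yr hs') m (xr hs') * (\<integral>\<omega>. (\<Sum>v\<in>MM. T (Suc (yr (run n f g \<omega> t))) v (xr (run n f g \<omega> t)) *
         ?B (run n f g \<omega> t) v) \<partial>pre t)" by simp
  also have "(\<integral>\<omega>. (\<Sum>v\<in>MM. T (Suc (yr (run n f g \<omega> t))) v (xr (run n f g \<omega> t)) *
         ?B (run n f g \<omega> t) v) \<partial>pre t) = PH g (Suc t) hs'"
  proof -
    have "PH g (Suc t) hs' = (\<integral>\<omega>. ind (run n f g \<omega> (Suc t) = hs') \<partial>pre (Suc t))"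
      by (simp add: PH_def prob_ind)
    also have "\<dots> = (\<integral>\<omega>. (\<Sum>v\<in>MM. T (Suc (yr (run n f g \<omega> t))) v (xr (run n f g \<omega> t)) *
         ?B (run n f g \<omega> t) v) \<partial>pre t)"
      by (rule stepG[OF assms, where F="\<lambda>r v. ind (r = hs')"])
    finally show ?thesis by simp
  qed
  finally show "PMH g (Suc t) hs' m = PH g (Suc t) hs' * T (yr hs') m (xr hs')" by simp
qed

lemma F_all: "Fprop g t"
  by (induction t) (auto intro: F0 F_Suc)

end

context sys begin

lemma G_all:
  fixes K :: "obs list \<times> nat list \<Rightarrow> (real \<Rightarrow> real) \<Rightarrow> real"
  shows "(\<integral>\<omega>. K (run n f g \<omega> t) (mf n f \<omega> t) \<partial>pre t) =
     (\<integral>\<omega>. (\<Sum>m\<in>MM. T (yr (run n f g \<omega> t)) m (xr (run n f g \<omega> t)) * K (run n f g \<omega> t) m) \<partial>pre t)"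
  by (rule G_of_F[OF F_all])

lemma PH_pos: "\<omega> \<in> set_pmf (pre t) \<Longrightarrow> PH g t (run n f g \<omega> t) > 0"
  unfolding PH_def by (rule measure_pmf_posI) auto

lemma belief_eq:
  assumes \<omega>: "\<omega> \<in> set_pmf (pre t)"
  shows "belief n f P0 PW q g t (fst (run n f g \<omega> t)) (butlast (snd (run n f g \<omega> t))) =
         (\<lambda>m. T (yr (run n f g \<omega> t)) m (xr (run n f g \<omega> t)))"
proof
  fix m
  let ?r = "run n f g \<omega> t"
  have eq: "fst (run n f g \<omega>' t) = fst ?r \<and> butlast (snd (run n f g \<omega>' t)) = butlast (snd ?r)
            \<longleftrightarrow> run n f g \<omega>' t = ?r" for \<omega>'
  proof
    assume a: "fst (run n f g \<omega>' t) = fst ?r \<and> butlast (snd (run n f g \<omega>' t)) = butlast (snd ?r)"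
    have "snd (run n f g \<omega>' t) = snd ?r"
      using run_last[of g \<omega>' t] run_last[of g \<omega> t] a by metis
    then show "run n f g \<omega>' t = ?r" using a by (simp add: prod_eq_iff)
  qed simp
  have e1: "{\<omega>'. mf n f \<omega>' t = m \<and> fst (run n f g \<omega>' t) = fst ?r \<and> butlast (snd (run n f g \<omega>' t)) = butlast (snd ?r)}
     = {\<omega>'. run n f g \<omega>' t = ?r \<and> mf n f \<omega>' t = m}" using eq by blast
  have e2: "{\<omega>'. fst (run n f g \<omega>' t) = fst ?r \<and> butlast (snd (run n f g \<omega>' t)) = butlast (snd ?r)}
     = {\<omega>'. run n f g \<omega>' t = ?r}" using eq by blast
  have "belief n f P0 PW q g t (fst ?r) (butlast (snd ?r)) m = PMH g t ?r m / PH g t ?r"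
    unfolding belief_def e1 e2 PMH_def PH_def ..
  also have "\<dots> = T (yr ?r) m (xr ?r)"
  proof -
    have "PMH g t ?r m = PH g t ?r * T (yr ?r) m (xr ?r)" using F_all[of g t] unfolding Fprop_def by blast
    then show ?thesis using PH_pos[OF \<omega>, of g] by simp
  qed
  finally show "belief n f P0 PW q g t (fst ?r) (butlast (snd ?r)) m = T (yr ?r) m (xr ?r)" .
qed

definition C0 :: "(((real \<Rightarrow> real) \<Rightarrow> real) \<Rightarrow> (real \<Rightarrow> real)) \<Rightarrow>
    ((real \<Rightarrow> real) \<Rightarrow> (real \<Rightarrow> real) \<Rightarrow> nat \<Rightarrow> real) \<Rightarrow> (real \<Rightarrow> real) \<Rightarrow> nat \<Rightarrow> nat \<Rightarrow> real" where
  "C0 h c x y a = (\<Sum>m\<in>MM. c m (h (\<lambda>m'. T y m' x)) a * T y m x)"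

lemma exp_cost_eq:
  "exp_cost n f P0 PW q h c g t = (\<integral>\<omega>. C0 h c (xr (run n f g \<omega> t)) (yr (run n f g \<omega> t)) (last (snd (run n f g \<omega> t))) \<partial>pre t)"
proof -
  let ?K = "\<lambda>r mm. c mm (h (\<lambda>m'. T (yr r) m' (xr r))) (last (snd r))"
  have "exp_cost n f P0 PW q h c g t = (\<integral>\<omega>. ?K (run n f g \<omega> t) (mf n f \<omega> t) \<partial>pre t)"
    unfolding exp_cost_def
  proof (rule integral_cong_AE)
    show "AE \<omega> in measure_pmf (pre t). (let (os, as) = run n f g \<omega> t
             in c (mf n f \<omega> t) (h (belief n f P0 PW q g t os (butlast as))) (last as)) =
          ?K (run n f g \<omega> t) (mf n f \<omega> t)"
      by (rule AE_pmfI) (simp add: belief_eq case_prod_beta)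
  qed auto
  also have "\<dots> = (\<integral>\<omega>. C0 h c (xr (run n f g \<omega> t)) (yr (run n f g \<omega> t)) (last (snd (run n f g \<omega> t))) \<partial>pre t)"
    by (subst G_all) (simp add: C0_def mult.commute)
  finally show ?thesis .
qed

definition nodeN :: "strategy \<Rightarrow> nat \<Rightarrow> obs list \<times> nat list \<Rightarrow> obs list \<times> nat list" where
  "nodeN g t r = (fst r @ [None], snd r @ [g (t + 2) (fst r @ [None]) (snd r)])"
definition nodeS :: "strategy \<Rightarrow> nat \<Rightarrow> obs list \<times> nat list \<Rightarrow> (real \<Rightarrow> real) \<Rightarrow> obs list \<times> nat list" where
  "nodeS g t r v = (fst r @ [Some v], snd r @ [g (t + 2) (fst r @ [Some v]) (snd r)])"

definition NX :: "strategy \<Rightarrow> nat \<Rightarrow> (obs list \<times> nat list \<Rightarrow> real) \<Rightarrow> obs list \<times> nat list \<Rightarrow> real" where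
  "NX g t \<Phi> r = (if last (snd r) = 1
      then q * (\<Sum>v\<in>MM. T (Suc (yr r)) v (xr r) * \<Phi> (nodeS g t r v)) + (1 - q) * \<Phi> (nodeN g t r)
      else \<Phi> (nodeN g t r))"

lemma exp_step:
  fixes \<Phi> :: "obs list \<times> nat list \<Rightarrow> real"
  shows "(\<integral>\<omega>. \<Phi> (run n f g \<omega> (Suc t)) \<partial>pre (Suc t)) = (\<integral>\<omega>. NX g t \<Phi> (run n f g \<omega> t) \<partial>pre t)"
proof -
  have "(\<integral>\<omega>. \<Phi> (run n f g \<omega> (Suc t)) \<partial>pre (Suc t)) =
     (\<integral>\<omega>. (\<Sum>v\<in>MM. T (Suc (yr (run n f g \<omega> t))) v (xr (run n f g \<omega> t)) *
         (q * \<Phi> (stepR g t (run n f g \<omega> t) True v) + (1 - q) * \<Phi> (stepR g t (run n f g \<omega> t) False v))) \<partial>pre t)"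
    by (rule stepG[OF F_all, where F="\<lambda>r v. \<Phi> r"])
  also have "\<dots> = (\<integral>\<omega>. NX g t \<Phi> (run n f g \<omega> t) \<partial>pre t)"
  proof (rule integral_cong_AE)
    show "AE \<omega> in measure_pmf (pre t). (\<Sum>v\<in>MM. T (Suc (yr (run n f g \<omega> t))) v (xr (run n f g \<omega> t)) *
         (q * \<Phi> (stepR g t (run n f g \<omega> t) True v) + (1 - q) * \<Phi> (stepR g t (run n f g \<omega> t) False v))) =
       NX g t \<Phi> (run n f g \<omega> t)"
    proof (rule AE_pmfI)
      fix \<omega> assume \<omega>: "\<omega> \<in> set_pmf (pre t)"
      let ?r = "run n f g \<omega> t"
      have x: "xr ?r \<in> MM" by (rule xof_M[OF \<omega>])
      note ts = T_sum[OF x, of "Suc (yr ?r)"]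
      show "(\<Sum>v\<in>MM. T (Suc (yr ?r)) v (xr ?r) *
         (q * \<Phi> (stepR g t ?r True v) + (1 - q) * \<Phi> (stepR g t ?r False v))) = NX g t \<Phi> ?r"
      proof (cases "last (snd ?r) = 1")
        case True
        then have sS: "stepR g t ?r True v = nodeS g t ?r v" and sN: "stepR g t ?r False v = nodeN g t ?r" for v
          by (auto simp: stepR_def obsv_def nodeS_def nodeN_def)
        have "(\<Sum>v\<in>MM. T (Suc (yr ?r)) v (xr ?r) *
           (q * \<Phi> (stepR g t ?r True v) + (1 - q) * \<Phi> (stepR g t ?r False v))) =
           (\<Sum>v\<in>MM. q * (T (Suc (yr ?r)) v (xr ?r) * \<Phi> (nodeS g t ?r v)) +
             ((1 - q) * \<Phi> (nodeN g t ?r)) * T (Suc (yr ?r)) v (xr ?r))"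
          by (rule sum.cong) (auto simp: sS sN algebra_simps)
        also have "\<dots> = q * (\<Sum>v\<in>MM. T (Suc (yr ?r)) v (xr ?r) * \<Phi> (nodeS g t ?r v)) +
           (1 - q) * \<Phi> (nodeN g t ?r) * (\<Sum>v\<in>MM. T (Suc (yr ?r)) v (xr ?r))"
          by (simp add: sum.distrib sum_distrib_left)
        finally have "(\<Sum>v\<in>MM. T (Suc (yr ?r)) v (xr ?r) *
           (q * \<Phi> (stepR g t ?r True v) + (1 - q) * \<Phi> (stepR g t ?r False v))) =
           q * (\<Sum>v\<in>MM. T (Suc (yr ?r)) v (xr ?r) * \<Phi> (nodeS g t ?r v)) +
           (1 - q) * \<Phi> (nodeN g t ?r) * (\<Sum>v\<in>MM. T (Suc (yr ?r)) v (xr ?r))" .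
        then show ?thesis using True ts by (simp add: NX_def)
      next
        case False
        then have sS: "stepR g t ?r b v = nodeN g t ?r" for b v
          by (auto simp: stepR_def obsv_def nodeS_def nodeN_def)
        have "(\<Sum>v\<in>MM. T (Suc (yr ?r)) v (xr ?r) *
           (q * \<Phi> (stepR g t ?r True v) + (1 - q) * \<Phi> (stepR g t ?r False v))) =
           (\<Sum>v\<in>MM. \<Phi> (nodeN g t ?r) * T (Suc (yr ?r)) v (xr ?r))"
          by (rule sum.cong) (auto simp: sS algebra_simps)
        also have "\<dots> = \<Phi> (nodeN g t ?r) * (\<Sum>v\<in>MM. T (Suc (yr ?r)) v (xr ?r))"
          by (simp add: sum_distrib_left)
        finally have "(\<Sum>v\<in>MM. T (Suc (yr ?r)) v (xr ?r) *
           (q * \<Phi> (stepR g t ?r True v) + (1 - q) * \<Phi> (stepR g t ?r False v))) =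
           \<Phi> (nodeN g t ?r) * (\<Sum>v\<in>MM. T (Suc (yr ?r)) v (xr ?r))" .
        then show ?thesis using False ts by (simp add: NX_def)
      qed
    qed
  qed auto
  finally show ?thesis .
qed

end

locale dp = sys +
  fixes h :: "((real \<Rightarrow> real) \<Rightarrow> real) \<Rightarrow> (real \<Rightarrow> real)"
    and c :: "(real \<Rightarrow> real) \<Rightarrow> (real \<Rightarrow> real) \<Rightarrow> nat \<Rightarrow> real"
    and \<gamma> cmax :: real and k :: nat and mstar :: "real \<Rightarrow> real"
    and V :: "(real \<Rightarrow> real) \<Rightarrow> nat \<Rightarrow> real"
  assumes gamma_range: "0 < \<gamma>" "\<gamma> < 1"
    and h_range: "\<And>b. is_belief n S b \<Longrightarrow> h b \<in> Mset n S"
    and c_nonneg: "\<And>m m' a. m \<in> Mset n S \<Longrightarrow> m' \<in> Mset n S \<Longrightarrow> a \<in> {0, 1} \<Longrightarrow> 0 \<le> c m m' a"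
    and c_bound: "\<And>m m' a. m \<in> Mset n S \<Longrightarrow> m' \<in> Mset n S \<Longrightarrow> a \<in> {0, 1} \<Longrightarrow> c m m' a \<le> cmax"
    and mstar_in: "mstar \<in> Mset n S"
    and V_sol: "\<And>x y. x \<in> Mset n S \<Longrightarrow> y \<le> k \<Longrightarrow>
                  V x y = min (V0 n S f PW h c \<gamma> k mstar V x y) (V1 n S f PW h c \<gamma> q k mstar V x y)"
begin

abbreviation "CC \<equiv> C0 h c"
abbreviation "B \<equiv> cmax / (1 - \<gamma>)"
abbreviation "Vs \<equiv> V mstar 0"

definition Vn :: "(real \<Rightarrow> real) \<Rightarrow> nat \<Rightarrow> real" where
  "Vn x y = (if y < k then 1 else 0) * V x (y + 1) + (if y = k then 1 else 0) * V mstar 0"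

lemma V0_eq: "V0 n S f PW h c \<gamma> k mstar V x y = CC x y 0 + \<gamma> * Vn x y"
  by (simp add: V0_def C0_def Vn_def)

lemma V1_eq: "V1 n S f PW h c \<gamma> q k mstar V x y =
   CC x y 1 + (1 - q) * \<gamma> * Vn x y + q * \<gamma> * (\<Sum>m'\<in>MM. T (Suc y) m' x * V m' 0)"
  by (simp add: V1_def C0_def Vn_def)

lemma C0_bounds: assumes "x \<in> MM" "a \<in> {0, 1}"
  shows "0 \<le> CC x y a" "CC x y a \<le> cmax"
proof -
  have hm: "h (\<lambda>m'. T y m' x) \<in> MM" by (rule h_range[OF T_belief[OF assms(1)]])
  show "0 \<le> CC x y a" unfolding C0_def
    by (rule sum_nonneg) (auto intro!: mult_nonneg_nonneg c_nonneg[OF _ hm assms(2)] T_nonneg)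
  have "CC x y a \<le> (\<Sum>m\<in>MM. cmax * T y m x)" unfolding C0_def
    by (rule sum_mono) (auto intro!: mult_right_mono c_bound[OF _ hm assms(2)] T_nonneg)
  also have "\<dots> = cmax" using T_sum[OF assms(1)] by (simp add: sum_distrib_left[symmetric])
  finally show "CC x y a \<le> cmax" .
qed

lemma cmax_nonneg: "0 \<le> cmax"
  using c_nonneg[OF mstar_in mstar_in, of 0] c_bound[OF mstar_in mstar_in, of 0] by simp

lemma B_nonneg: "0 \<le> B" using cmax_nonneg gamma_range by simp

lemma B_eq: "cmax + \<gamma> * B = B"
  using gamma_range by (simp add: field_simps)

definition DD :: "((real \<Rightarrow> real) \<times> nat) set" where "DD = MM \<times> {..k}"

lemma DD_fin: "finite DD" unfolding DD_def using Mset_fin by simp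
lemma DD_ne: "DD \<noteq> {}" unfolding DD_def using mstar_in by auto

lemma Vn_in: assumes "x \<in> MM" "y \<le> k"
  shows "\<exists>p\<in>DD. Vn x y = case_prod V p"
proof (cases "y < k")
  case True
  have "Vn x y = case_prod V (x, Suc y)" using True by (simp add: Vn_def)
  moreover have "(x, Suc y) \<in> DD" using True assms by (simp add: DD_def)
  ultimately show ?thesis by blast
next
  case False then have "y = k" using assms by simp
  then have "Vn x y = case_prod V (mstar, 0)" by (simp add: Vn_def)
  moreover have "(mstar, 0) \<in> DD" using mstar_in by (simp add: DD_def)
  ultimately show ?thesis by blast
qed

lemma V_bounds: assumes "x \<in> MM" "y \<le> k" shows "0 \<le> V x y" "V x y \<le> B"
proof -
  define Mx where "Mx = Max (case_prod V ` DD)"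
  define Mn where "Mn = Min (case_prod V ` DD)"
  have fin: "finite (case_prod V ` DD)" using DD_fin by simp
  have ne: "case_prod V ` DD \<noteq> {}" using DD_ne by simp
  have leMx: "p \<in> DD \<Longrightarrow> case_prod V p \<le> Mx" for p unfolding Mx_def using fin by auto
  have geMn: "p \<in> DD \<Longrightarrow> Mn \<le> case_prod V p" for p unfolding Mn_def using fin by auto
  have up: "V x' y' \<le> cmax + \<gamma> * Mx" if "(x', y') \<in> DD" for x' y'
  proof -
    have x': "x' \<in> MM" "y' \<le> k" using that by (auto simp: DD_def)
    obtain p where p: "p \<in> DD" "Vn x' y' = case_prod V p" using Vn_in[OF x'] by blast
    have "V x' y' \<le> V0 n S f PW h c \<gamma> k mstar V x' y'" using V_sol[OF x'] by simp
    also have "\<dots> = CC x' y' 0 + \<gamma> * Vn x' y'" by (rule V0_eq)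
    also have "\<dots> \<le> cmax + \<gamma> * Mx"
    proof (rule add_mono)
      show "CC x' y' 0 \<le> cmax" using C0_bounds(2)[OF x'(1), of 0 y'] by simp
      show "\<gamma> * Vn x' y' \<le> \<gamma> * Mx" using p leMx[OF p(1)] gamma_range by (simp add: mult_left_mono)
    qed
    finally show ?thesis .
  qed
  have lo: "\<gamma> * Mn \<le> V x' y'" if "(x', y') \<in> DD" for x' y'
  proof -
    have x': "x' \<in> MM" "y' \<le> k" using that by (auto simp: DD_def)
    obtain p where p: "p \<in> DD" "Vn x' y' = case_prod V p" using Vn_in[OF x'] by blast
    have vn: "Mn \<le> Vn x' y'" using p geMn by simp
    have g1: "\<gamma> * Mn \<le> \<gamma> * Vn x' y'" using vn gamma_range by (simp add: mult_left_mono)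
    have a: "\<gamma> * Mn \<le> V0 n S f PW h c \<gamma> k mstar V x' y'"
    proof -
      have "0 \<le> CC x' y' 0" using C0_bounds(1)[OF x'(1), of 0 y'] by simp
      then show ?thesis unfolding V0_eq using g1 by linarith
    qed
    have s: "Mn \<le> (\<Sum>m'\<in>MM. T (Suc y') m' x' * V m' 0)"
    proof -
      have "Mn = (\<Sum>m'\<in>MM. T (Suc y') m' x' * Mn)"
        using T_sum[OF x'(1)] by (simp add: sum_distrib_right[symmetric])
      also have "\<dots> \<le> (\<Sum>m'\<in>MM. T (Suc y') m' x' * V m' 0)"
      proof (rule sum_mono)
        fix m' assume m': "m' \<in> MM"
        have "Mn \<le> V m' 0" using geMn[of "(m', 0)"] m' by (simp add: DD_def)
        then show "T (Suc y') m' x' * Mn \<le> T (Suc y') m' x' * V m' 0"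
          by (rule mult_left_mono) (rule T_nonneg)
      qed
      finally show ?thesis .
    qed
    have b: "\<gamma> * Mn \<le> V1 n S f PW h c \<gamma> q k mstar V x' y'"
    proof -
      have "\<gamma> * Mn = (1 - q) * \<gamma> * Mn + q * \<gamma> * Mn" by (simp add: algebra_simps)
      also have "\<dots> \<le> (1 - q) * \<gamma> * Vn x' y' + q * \<gamma> * (\<Sum>m'\<in>MM. T (Suc y') m' x' * V m' 0)"
      proof (rule add_mono)
      show "(1 - q) * \<gamma> * Mn \<le> (1 - q) * \<gamma> * Vn x' y'"
        using q_range gamma_range vn by (intro mult_left_mono) auto
      show "q * \<gamma> * Mn \<le> q * \<gamma> * (\<Sum>m'\<in>MM. T (Suc y') m' x' * V m' 0)"
        using q_range gamma_range s by (intro mult_left_mono) auto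
    qed
      also have "\<dots> \<le> V1 n S f PW h c \<gamma> q k mstar V x' y'"
        unfolding V1_eq using C0_bounds(1)[OF x'(1), of 1 y'] by simp
      finally show ?thesis .
    qed
    show ?thesis using V_sol[OF x'] a b by simp
  qed
  obtain p1 where p1: "p1 \<in> DD" "case_prod V p1 = Mx" unfolding Mx_def using Max_in[OF fin ne] by auto
  obtain p2 where p2: "p2 \<in> DD" "case_prod V p2 = Mn" unfolding Mn_def using Min_in[OF fin ne] by auto
  have "Mx \<le> cmax + \<gamma> * Mx" using up[of "fst p1" "snd p1"] p1 by (simp add: case_prod_beta)
  then have "(1 - \<gamma>) * Mx \<le> cmax" by (simp add: algebra_simps)
  then have MxB: "Mx \<le> B" using gamma_range by (simp add: pos_le_divide_eq mult.commute)
  have "\<gamma> * Mn \<le> Mn" using lo[of "fst p2" "snd p2"] p2 by (simp add: case_prod_beta)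
  then have "0 \<le> (1 - \<gamma>) * Mn" by (simp add: algebra_simps)
  then have Mn0: "0 \<le> Mn" using gamma_range by (simp add: zero_le_mult_iff)
  have xy: "(x, y) \<in> DD" using assms by (simp add: DD_def)
  show "0 \<le> V x y" using geMn[OF xy] Mn0 by simp
  show "V x y \<le> B" using leMx[OF xy] MxB by simp
qed

lemma Vs_bounds: "0 \<le> Vs" "Vs \<le> B" using V_bounds[OF mstar_in] by auto

definition good :: "obs list \<Rightarrow> bool" where
  "good os \<longleftrightarrow> (\<forall>i\<le>length os. yof (take i os) \<le> k)"

lemma good_snoc: "good (os @ [o']) \<longleftrightarrow> good os \<and> yof (os @ [o']) \<le> k"
proof -
  have "(\<forall>i\<le>length (os @ [o']). yof (take i (os @ [o'])) \<le> k) \<longleftrightarrow>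
        (\<forall>i\<le>length os. yof (take i os) \<le> k) \<and> yof (os @ [o']) \<le> k"
  proof
    assume a: "\<forall>i\<le>length (os @ [o']). yof (take i (os @ [o'])) \<le> k"
    show "(\<forall>i\<le>length os. yof (take i os) \<le> k) \<and> yof (os @ [o']) \<le> k"
    proof
      show "\<forall>i\<le>length os. yof (take i os) \<le> k"
      proof (intro allI impI)
        fix i assume "i \<le> length os"
        then show "yof (take i os) \<le> k" using a[rule_format, of i] by simp
      qed
      show "yof (os @ [o']) \<le> k" using a[rule_format, of "Suc (length os)"] by simp
    qed
  next
    assume a: "(\<forall>i\<le>length os. yof (take i os) \<le> k) \<and> yof (os @ [o']) \<le> k"
    show "\<forall>i\<le>length (os @ [o']). yof (take i (os @ [o'])) \<le> k"
    proof (intro allI impI)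
      fix i assume i: "i \<le> length (os @ [o'])"
      show "yof (take i (os @ [o'])) \<le> k"
      proof (cases "i \<le> length os")
        case True then show ?thesis using a by simp
      next
        case False then have "i = Suc (length os)" using i by simp
        then show ?thesis using a by simp
      qed
    qed
  qed
  then show ?thesis by (simp add: good_def)
qed

lemma good_y: "good os \<Longrightarrow> yof os \<le> k"
  unfolding good_def by (metis order_refl take_all)

lemma yof_le: "yof os \<le> length os"
  unfolding yof_def by (metis length_rev length_takeWhile_le)

lemma good_one: "good [Some v]"
  unfolding good_def yof_def by (auto simp: le_Suc_eq)

definition Phl :: "obs list \<Rightarrow> real" where
  "Phl os = (if good os then V (xof os) (yof os) else 0)"
definition Psu :: "obs list \<Rightarrow> real" where
  "Psu os = (if good os then V (xof os) (yof os) else B)"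
definition bad :: "obs list \<Rightarrow> real" where
  "bad os = ind (\<not> good os)"
definition err :: "obs list \<times> nat list \<Rightarrow> real" where
  "err r = ind (good (fst r) \<and> yr r = k) * (if last (snd r) = 1 then 1 - q else 1)"

lemma fst_nodes[simp]: "fst (nodeN g t r) = fst r @ [None]" "fst (nodeS g t r v) = fst r @ [Some v]"
  by (auto simp: nodeN_def nodeS_def)

lemma Vn_alt: assumes "y \<le> k"
  shows "Vn x y = (if y < k then V x (Suc y) else 0) + ind (y = k) * Vs"
  using assms by (auto simp: Vn_def ind_def)

lemma pt_low:
  assumes x: "xr r \<in> MM" and a: "last (snd r) \<in> {0, 1}"
  shows "Phl (fst r) \<le> CC (xr r) (yr r) (last (snd r)) + \<gamma> * NX g t (\<lambda>r. Phl (fst r)) r + \<gamma> * Vs * err r"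
proof (cases "good (fst r)")
  case True
  have y: "yr r \<le> k" by (rule good_y[OF True])
  have pN: "Phl (fst r @ [None]) = (if yr r < k then V (xr r) (Suc (yr r)) else 0)"
    using True y by (auto simp: Phl_def good_snoc)
  have pS: "Phl (fst r @ [Some v]) = V v 0" for v
    using True by (simp add: Phl_def good_snoc)
  have V: "V (xr r) (yr r) = min (V0 n S f PW h c \<gamma> k mstar V (xr r) (yr r)) (V1 n S f PW h c \<gamma> q k mstar V (xr r) (yr r))"
    by (rule V_sol[OF x y])
  show ?thesis
  proof (cases "last (snd r) = 1")
    case a1: True
    have "Phl (fst r) \<le> V1 n S f PW h c \<gamma> q k mstar V (xr r) (yr r)" using True V by (simp add: Phl_def)
    also have "\<dots> = CC (xr r) (yr r) (last (snd r)) + \<gamma> * NX g t (\<lambda>r. Phl (fst r)) r + \<gamma> * Vs * err r"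
      unfolding V1_eq Vn_alt[OF y] using a1 True
      by (simp add: NX_def pN pS err_def algebra_simps)
    finally show ?thesis .
  next
    case a0: False
    then have a0': "last (snd r) = 0" using a by auto
    have "Phl (fst r) \<le> V0 n S f PW h c \<gamma> k mstar V (xr r) (yr r)" using True V by (simp add: Phl_def)
    also have "\<dots> = CC (xr r) (yr r) (last (snd r)) + \<gamma> * NX g t (\<lambda>r. Phl (fst r)) r + \<gamma> * Vs * err r"
      unfolding V0_eq Vn_alt[OF y] using a0 a0' True
      by (simp add: NX_def pN err_def algebra_simps)
    finally show ?thesis .
  qed
next
  case False
  have "NX g t (\<lambda>r. Phl (fst r)) r = 0" using False by (simp add: NX_def Phl_def good_snoc)
  moreover have "err r = 0" using False by (simp add: err_def)
  moreover have "0 \<le> CC (xr r) (yr r) (last (snd r))" by (rule C0_bounds(1)[OF x a])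
  ultimately show ?thesis using False by (simp add: Phl_def)
qed

lemma pt_bad:
  assumes x: "xr r \<in> MM"
  shows "NX g t (\<lambda>r. bad (fst r)) r = bad (fst r) + err r"
proof (cases "good (fst r)")
  case True
  have y: "yr r \<le> k" by (rule good_y[OF True])
  have bN: "ind (\<not> good (fst r @ [None])) = ind (yr r = k)" using True y by (auto simp: good_snoc ind_def)
  have bS: "ind (\<not> good (fst r @ [Some v])) = 0" for v using True by (simp add: good_snoc)
  show ?thesis using True by (simp add: NX_def bN bS err_def bad_def)
next
  case False
  have bN: "ind (\<not> good (fst r @ [o'])) = 1" for o' using False by (simp add: good_snoc)
  show ?thesis using False T_sum[OF x] by (simp add: NX_def bN err_def bad_def sum_distrib_left[symmetric])
qed

end

lemma tele_low:
  fixes A c d :: "nat \<Rightarrow> real" and \<gamma> Vs :: real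
  assumes step: "\<And>t. A t \<le> c t + \<gamma> * A (Suc t) + \<gamma> * Vs * d t" and g: "0 \<le> \<gamma>"
  shows "A 0 \<le> (\<Sum>t<N. \<gamma> ^ t * c t) + \<gamma> ^ N * A N + Vs * (\<Sum>t<N. \<gamma> ^ Suc t * d t)"
proof (induction N)
  case (Suc N)
  have "\<gamma> ^ N * A N \<le> \<gamma> ^ N * (c N + \<gamma> * A (Suc N) + \<gamma> * Vs * d N)"
    using step g by (simp add: mult_left_mono)
  then show ?case using Suc by (simp add: algebra_simps)
qed simp

lemma tele_up:
  fixes U c d :: "nat \<Rightarrow> real" and \<gamma> K :: real
  assumes step: "\<And>t. c t + \<gamma> * U (Suc t) \<le> U t + \<gamma> * K * d t" and g: "0 \<le> \<gamma>"
  shows "(\<Sum>t<N. \<gamma> ^ t * c t) + \<gamma> ^ N * U N \<le> U 0 + K * (\<Sum>t<N. \<gamma> ^ Suc t * d t)"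
proof (induction N)
  case (Suc N)
  have "\<gamma> ^ N * (c N + \<gamma> * U (Suc N)) \<le> \<gamma> ^ N * (U N + \<gamma> * K * d N)"
    using step g by (simp add: mult_left_mono)
  then show ?case using Suc by (simp add: algebra_simps)
qed simp

lemma tele_err:
  fixes e d :: "nat \<Rightarrow> real" and \<gamma> :: real
  assumes ed: "\<And>t. e (Suc t) = e t + d t"
    and dk: "\<And>t. \<gamma> ^ Suc t * d t \<le> \<gamma> ^ k * d t"
    and e01: "\<And>t. 0 \<le> e t \<and> e t \<le> 1" and d0: "\<And>t. 0 \<le> d t" and g: "0 \<le> \<gamma>"
  shows "(\<Sum>t<N. \<gamma> ^ Suc t * d t) \<le> \<gamma> ^ k"
proof -
  have s: "(\<Sum>t<N. d t) = e N - e 0" by (induction N) (auto simp: ed)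
  have "(\<Sum>t<N. \<gamma> ^ Suc t * d t) \<le> (\<Sum>t<N. \<gamma> ^ k * d t)" by (rule sum_mono) (rule dk)
  also have "\<dots> = \<gamma> ^ k * (e N - e 0)" by (simp add: sum_distrib_left[symmetric] s)
  also have "\<dots> \<le> \<gamma> ^ k * 1" using e01[of N] e01[of 0] g by (intro mult_left_mono) auto
  finally show ?thesis by simp
qed

context dp begin

lemma int_le:
  fixes F G :: "outcome \<Rightarrow> real"
  assumes "\<And>\<omega>. \<omega> \<in> set_pmf (pre t) \<Longrightarrow> F \<omega> \<le> G \<omega>"
  shows "(\<integral>\<omega>. F \<omega> \<partial>pre t) \<le> (\<integral>\<omega>. G \<omega> \<partial>pre t)"
  by (rule integral_mono_AE) (auto simp: integrable_measure_pmf_finite prefix_fin intro!: AE_pmfI assms)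

lemma int_lin:
  fixes F G H :: "outcome \<Rightarrow> real"
  shows "(\<integral>\<omega>. F \<omega> + a * G \<omega> + b * H \<omega> \<partial>pre t) =
         (\<integral>\<omega>. F \<omega> \<partial>pre t) + a * (\<integral>\<omega>. G \<omega> \<partial>pre t) + b * (\<integral>\<omega>. H \<omega> \<partial>pre t)"
  by (simp add: integrable_measure_pmf_finite prefix_fin)

lemma pt_up:
  assumes x: "xr r \<in> MM" and a: "last (snd r) \<in> {0, 1}"
    and rule: "good (fst r) \<Longrightarrow> last (snd r) = (if V0 n S f PW h c \<gamma> k mstar V (xr r) (yr r)
                   \<le> V1 n S f PW h c \<gamma> q k mstar V (xr r) (yr r) then 0 else 1)"
  shows "CC (xr r) (yr r) (last (snd r)) + \<gamma> * NX g t (\<lambda>r. Psu (fst r)) r \<le> Psu (fst r) + \<gamma> * (B - Vs) * err r"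
proof (cases "good (fst r)")
  case True
  have y: "yr r \<le> k" by (rule good_y[OF True])
  have pN: "Psu (fst r @ [None]) = Vn (xr r) (yr r) + ind (yr r = k) * (B - Vs)"
    using True y by (auto simp: Psu_def good_snoc Vn_alt ind_def)
  have pS: "Psu (fst r @ [Some v]) = V v 0" for v
    using True by (simp add: Psu_def good_snoc)
  have V: "V (xr r) (yr r) = min (V0 n S f PW h c \<gamma> k mstar V (xr r) (yr r)) (V1 n S f PW h c \<gamma> q k mstar V (xr r) (yr r))"
    by (rule V_sol[OF x y])
  show ?thesis
  proof (cases "V0 n S f PW h c \<gamma> k mstar V (xr r) (yr r) \<le> V1 n S f PW h c \<gamma> q k mstar V (xr r) (yr r)")
    case le: True
    then have a0: "last (snd r) = 0" using rule[OF True] by simp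
    have "Psu (fst r) = V0 n S f PW h c \<gamma> k mstar V (xr r) (yr r)" using True V le by (simp add: Psu_def)
    then show ?thesis unfolding V0_eq using a0 True
      by (simp add: NX_def pN err_def algebra_simps)
  next
    case gt: False
    then have a1: "last (snd r) = 1" using rule[OF True] by simp
    have "Psu (fst r) = V1 n S f PW h c \<gamma> q k mstar V (xr r) (yr r)" using True V gt by (simp add: Psu_def)
    have nx: "NX g t (\<lambda>r. Psu (fst r)) r = q * (\<Sum>v\<in>MM. T (Suc (yr r)) v (xr r) * V v 0) +
        (1 - q) * (Vn (xr r) (yr r) + ind (yr r = k) * (B - Vs))"
      using a1 by (simp add: NX_def pN pS)
    have ar: "\<And>CC g q S Vn I Bv Vs :: real. CC + g * (q * S + (1 - q) * (Vn + I * (Bv - Vs))) =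
       (CC + (1 - q) * g * Vn + q * g * S) + g * (Bv - Vs) * (I * (1 - q))"
      by (simp add: algebra_simps)
    have e: "err r = ind (yr r = k) * (1 - q)" using a1 True by (simp add: err_def)
    show ?thesis unfolding nx e ar \<open>Psu (fst r) = _\<close> V1_eq a1 by simp
  qed
next
  case False
  obtain Bv where Bv: "B = Bv" by blast
  have pB: "Psu (fst r @ [o']) = Bv" for o' using False Bv by (simp add: Psu_def good_snoc)
  have nx: "NX g t (\<lambda>r. Psu (fst r)) r = Bv"
  proof -
    have "(\<Sum>v\<in>MM. T (Suc (yr r)) v (xr r) * Bv) = Bv"
      using T_sum[OF x, of "Suc (yr r)"] by (simp add: sum_distrib_right[symmetric])
    then show ?thesis by (simp add: NX_def pB algebra_simps)
  qed
  have "CC (xr r) (yr r) (last (snd r)) \<le> cmax" by (rule C0_bounds(2)[OF x a])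
  moreover have "cmax + \<gamma> * Bv = Bv" using B_eq Bv by simp
  moreover have "Psu (fst r) = Bv" using False Bv by (simp add: Psu_def)
  moreover have "err r = 0" using False by (simp add: err_def)
  ultimately show ?thesis unfolding nx by simp
qed

definition Ag :: "strategy \<Rightarrow> nat \<Rightarrow> real" where
  "Ag g t = (\<integral>\<omega>. Phl (fst (run n f g \<omega> t)) \<partial>pre t)"
definition Ug :: "strategy \<Rightarrow> nat \<Rightarrow> real" where
  "Ug g t = (\<integral>\<omega>. Psu (fst (run n f g \<omega> t)) \<partial>pre t)"
definition eg :: "strategy \<Rightarrow> nat \<Rightarrow> real" where
  "eg g t = (\<integral>\<omega>. bad (fst (run n f g \<omega> t)) \<partial>pre t)"
definition dg :: "strategy \<Rightarrow> nat \<Rightarrow> real" where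
  "dg g t = (\<integral>\<omega>. err (run n f g \<omega> t) \<partial>pre t)"
abbreviation cg :: "strategy \<Rightarrow> nat \<Rightarrow> real" where
  "cg g t \<equiv> exp_cost n f P0 PW q h c g t"

lemma A_step: assumes g: "g \<in> strategies"
  shows "Ag g t \<le> cg g t + \<gamma> * Ag g (Suc t) + \<gamma> * Vs * dg g t"
proof -
  have "Ag g t \<le> (\<integral>\<omega>. CC (xr (run n f g \<omega> t)) (yr (run n f g \<omega> t)) (last (snd (run n f g \<omega> t)))
     + \<gamma> * NX g t (\<lambda>r. Phl (fst r)) (run n f g \<omega> t) + (\<gamma> * Vs) * err (run n f g \<omega> t) \<partial>pre t)"
    unfolding Ag_def
    by (rule int_le) (use pt_low[OF xof_M run_act[OF g]] in \<open>simp add: mult.assoc\<close>)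
  also have "\<dots> = cg g t + \<gamma> * Ag g (Suc t) + \<gamma> * Vs * dg g t"
    unfolding int_lin exp_cost_eq Ag_def dg_def
    by (subst exp_step[where \<Phi>="\<lambda>r. Phl (fst r)"]) simp
  finally show ?thesis .
qed

lemma U_step: assumes g: "gs \<in> strategies"
  and gsr: "\<And>t os as. yof os \<le> k \<Longrightarrow>
                  gs t os as = (if V0 n S f PW h c \<gamma> k mstar V (xof os) (yof os)
                                   \<le> V1 n S f PW h c \<gamma> q k mstar V (xof os) (yof os) then 0 else 1)"
  shows "cg gs t + \<gamma> * Ug gs (Suc t) \<le> Ug gs t + \<gamma> * (B - Vs) * dg gs t"
proof -
  have "cg gs t + \<gamma> * Ug gs (Suc t) = (\<integral>\<omega>. CC (xr (run n f gs \<omega> t)) (yr (run n f gs \<omega> t)) (last (snd (run n f gs \<omega> t)))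
     + \<gamma> * NX gs t (\<lambda>r. Psu (fst r)) (run n f gs \<omega> t) + 0 * 0 \<partial>pre t)"
    unfolding int_lin exp_cost_eq Ug_def
    by (subst exp_step[where \<Phi>="\<lambda>r. Psu (fst r)"]) simp
  also have "\<dots> \<le> (\<integral>\<omega>. Psu (fst (run n f gs \<omega> t)) + (\<gamma> * (B - Vs)) * err (run n f gs \<omega> t) + 0 * 0 \<partial>pre t)"
  proof (rule int_le)
    fix \<omega> assume \<omega>: "\<omega> \<in> set_pmf (pre t)"
    let ?r = "run n f gs \<omega> t"
    have r: "good (fst ?r) \<Longrightarrow> last (snd ?r) = (if V0 n S f PW h c \<gamma> k mstar V (xr ?r) (yr ?r)
                   \<le> V1 n S f PW h c \<gamma> q k mstar V (xr ?r) (yr ?r) then 0 else 1)"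
    proof -
      assume "good (fst ?r)"
      then have "yr ?r \<le> k" by (rule good_y)
      then show ?thesis using run_last[of gs \<omega> t] gsr by (metis last_snoc)
    qed
    show "CC (xr ?r) (yr ?r) (last (snd ?r)) + \<gamma> * NX gs t (\<lambda>r. Psu (fst r)) ?r + 0 * 0 \<le>
          Psu (fst ?r) + (\<gamma> * (B - Vs)) * err ?r + 0 * 0"
      using pt_up[OF xof_M[OF \<omega>] run_act[OF g] r] by (simp add: mult.assoc)
  qed
  also have "\<dots> = Ug gs t + \<gamma> * (B - Vs) * dg gs t"
    unfolding int_lin Ug_def dg_def by simp
  finally show ?thesis .
qed

lemma e_step: "eg g (Suc t) = eg g t + dg g t"
proof -
  have "eg g (Suc t) = (\<integral>\<omega>. NX g t (\<lambda>r. bad (fst r)) (run n f g \<omega> t) \<partial>pre t)"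
    unfolding eg_def by (rule exp_step[where \<Phi>="\<lambda>r. bad (fst r)"])
  also have "\<dots> = (\<integral>\<omega>. bad (fst (run n f g \<omega> t)) + 1 * err (run n f g \<omega> t) + 0 * 0 \<partial>pre t)"
    by (rule integral_cong_AE) (auto intro!: AE_pmfI simp: pt_bad[OF xof_M])
  also have "\<dots> = eg g t + dg g t" unfolding int_lin eg_def dg_def by simp
  finally show ?thesis .
qed

lemma err_nonneg: "0 \<le> err r" using q_range by (simp add: err_def)
lemma err_le1: "err r \<le> 1" using q_range by (simp add: err_def ind_def)

lemma d_nonneg: "0 \<le> dg g t"
  unfolding dg_def by (rule integral_nonneg_AE) (auto intro!: AE_pmfI err_nonneg)

lemma d_k: "\<gamma> ^ Suc t * dg g t \<le> \<gamma> ^ k * dg g t"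
proof -
  have "\<gamma> ^ Suc t * dg g t = (\<integral>\<omega>. \<gamma> ^ Suc t * err (run n f g \<omega> t) \<partial>pre t)"
    unfolding dg_def by simp
  also have "\<dots> \<le> (\<integral>\<omega>. \<gamma> ^ k * err (run n f g \<omega> t) \<partial>pre t)"
  proof (rule int_le)
    fix \<omega>
    let ?r = "run n f g \<omega> t"
    show "\<gamma> ^ Suc t * err ?r \<le> \<gamma> ^ k * err ?r"
    proof (cases "err ?r = 0")
      case False
      then have "yr ?r = k" by (auto simp: err_def ind_def split: if_splits)
      moreover have "yr ?r \<le> Suc t" using yof_le[of "fst ?r"] run_len[of g \<omega> t] by simp
      ultimately have "k \<le> Suc t" by simp
      then have "\<gamma> ^ Suc t \<le> \<gamma> ^ k" using gamma_range by (intro power_decreasing) auto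
      then show ?thesis using err_nonneg[of ?r] by (simp add: mult_right_mono)
    qed simp
  qed
  also have "\<dots> = \<gamma> ^ k * dg g t" unfolding dg_def by simp
  finally show ?thesis .
qed

lemma e01: "0 \<le> eg g t \<and> eg g t \<le> 1"
proof
  show "0 \<le> eg g t" unfolding eg_def by (rule integral_nonneg_AE) (auto simp: bad_def)
  have "eg g t \<le> (\<integral>\<omega>. 1 \<partial>pre t)" unfolding eg_def by (rule int_le) (simp add: bad_def)
  then show "eg g t \<le> 1" by simp
qed

lemma err_sum: "(\<Sum>t<N. \<gamma> ^ Suc t * dg g t) \<le> \<gamma> ^ k"
  by (rule tele_err[where e="eg g"]) (use e_step d_k e01 d_nonneg gamma_range in auto)

lemma A_le_B: "Ag g t \<le> B"
proof -
  have "Ag g t \<le> (\<integral>\<omega>. B \<partial>pre t)" unfolding Ag_def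
  proof (rule int_le)
    fix \<omega> assume \<omega>: "\<omega> \<in> set_pmf (pre t)"
    show "Phl (fst (run n f g \<omega> t)) \<le> B"
      using V_bounds(2)[OF xof_M[OF \<omega>] good_y] B_nonneg by (simp add: Phl_def)
  qed
  then show ?thesis by simp
qed

lemma U_nonneg: "0 \<le> Ug g t"
  unfolding Ug_def
proof (rule integral_nonneg_AE, rule AE_pmfI)
  fix \<omega> assume \<omega>: "\<omega> \<in> set_pmf (pre t)"
  show "0 \<le> Psu (fst (run n f g \<omega> t))"
    using V_bounds(1)[OF xof_M[OF \<omega>] good_y] B_nonneg by (simp add: Psu_def)
qed

lemma AU0: "Ag g 0 = Ug g' 0"
  unfolding Ag_def Ug_def by (simp add: Phl_def Psu_def good_one xof_def yof_def)

lemma c_bounds: "g \<in> strategies \<Longrightarrow> 0 \<le> cg g t \<and> cg g t \<le> cmax"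
proof -
  assume g: "g \<in> strategies"
  have "0 \<le> cg g t" unfolding exp_cost_eq
    by (rule integral_nonneg_AE) (auto intro!: AE_pmfI C0_bounds(1)[OF xof_M run_act[OF g]])
  moreover have "cg g t \<le> (\<integral>\<omega>. cmax \<partial>pre t)" unfolding exp_cost_eq
    by (rule int_le) (rule C0_bounds(2)[OF xof_M run_act[OF g]])
  ultimately show ?thesis by simp
qed

lemma summ: assumes "g \<in> strategies" shows "summable (\<lambda>j. \<gamma> ^ j * cg g j)"
proof (rule summable_comparison_test')
  show "summable (\<lambda>j. cmax * \<gamma> ^ j)"
    using gamma_range by (intro summable_mult summable_geometric) simp
  fix j :: nat
  show "norm (\<gamma> ^ j * cg g j) \<le> cmax * \<gamma> ^ j"
    using c_bounds[OF assms, of j] gamma_range by (simp add: abs_mult mult.commute mult_left_mono)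
qed

theorem main_dp:
  assumes gs: "gs \<in> strategies"
    and gsr: "\<And>t os as. yof os \<le> k \<Longrightarrow>
                  gs t os as = (if V0 n S f PW h c \<gamma> k mstar V (xof os) (yof os)
                                   \<le> V1 n S f PW h c \<gamma> q k mstar V (xof os) (yof os) then 0 else 1)"
    and g: "g \<in> strategies"
  shows "Jcost n f P0 PW q h c \<gamma> gs \<le> Jcost n f P0 PW q h c \<gamma> g + B * \<gamma> ^ k"
proof -
  have g0: "0 \<le> \<gamma>" using gamma_range by simp
  have up: "(\<Sum>t<N. \<gamma> ^ t * cg gs t) \<le> Ug gs 0 + (B - Vs) * \<gamma> ^ k" for N
  proof -
    have "(\<Sum>t<N. \<gamma> ^ t * cg gs t) + \<gamma> ^ N * Ug gs N \<le> Ug gs 0 + (B - Vs) * (\<Sum>t<N. \<gamma> ^ Suc t * dg gs t)"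
      by (rule tele_up[of "cg gs" \<gamma> "Ug gs" "B - Vs" "dg gs", OF U_step[OF gs gsr] g0])
    moreover have "0 \<le> \<gamma> ^ N * Ug gs N" using U_nonneg g0 by simp
    moreover have "(B - Vs) * (\<Sum>t<N. \<gamma> ^ Suc t * dg gs t) \<le> (B - Vs) * \<gamma> ^ k"
      using err_sum Vs_bounds by (intro mult_left_mono) auto
    ultimately show ?thesis by linarith
  qed
  have J1: "Jcost n f P0 PW q h c \<gamma> gs \<le> Ug gs 0 + (B - Vs) * \<gamma> ^ k"
    unfolding Jcost_def by (rule suminf_le_const[OF summ[OF gs] up])
  have low: "Ag g 0 - Vs * \<gamma> ^ k \<le> Jcost n f P0 PW q h c \<gamma> g + \<gamma> ^ N * B" for N
  proof -
    have "Ag g 0 \<le> (\<Sum>t<N. \<gamma> ^ t * cg g t) + \<gamma> ^ N * Ag g N + Vs * (\<Sum>t<N. \<gamma> ^ Suc t * dg g t)"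
      by (rule tele_low[of "Ag g" "cg g" \<gamma> Vs "dg g", OF A_step[OF g] g0])
    moreover have "(\<Sum>t<N. \<gamma> ^ t * cg g t) \<le> Jcost n f P0 PW q h c \<gamma> g"
      unfolding Jcost_def
      by (rule sum_le_suminf[OF summ[OF g]]) (use c_bounds[OF g] g0 in auto)
    moreover have "\<gamma> ^ N * Ag g N \<le> \<gamma> ^ N * B" using mult_left_mono[OF A_le_B zero_le_power[OF g0]] .
    moreover have "Vs * (\<Sum>t<N. \<gamma> ^ Suc t * dg g t) \<le> Vs * \<gamma> ^ k"
      using err_sum Vs_bounds by (intro mult_left_mono) auto
    ultimately show ?thesis by linarith
  qed
  have J2: "Ag g 0 - Vs * \<gamma> ^ k \<le> Jcost n f P0 PW q h c \<gamma> g"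
  proof (rule ccontr)
    assume "\<not> ?thesis"
    then have pos: "0 < (Ag g 0 - Vs * \<gamma> ^ k - Jcost n f P0 PW q h c \<gamma> g) / (B + 1)"
      using B_nonneg by simp
    obtain N where N: "\<gamma> ^ N < (Ag g 0 - Vs * \<gamma> ^ k - Jcost n f P0 PW q h c \<gamma> g) / (B + 1)"
      using real_arch_pow_inv[OF pos gamma_range(2)] by blast
    then have "\<gamma> ^ N * (B + 1) < Ag g 0 - Vs * \<gamma> ^ k - Jcost n f P0 PW q h c \<gamma> g"
      using B_nonneg by (simp add: pos_less_divide_eq)
    moreover have "\<gamma> ^ N * B \<le> \<gamma> ^ N * (B + 1)"
      by (rule mult_left_mono[OF _ zero_le_power[OF g0]]) simp
    ultimately show False using low[of N] by linarith
  qed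
  show ?thesis using J1 J2 AU0[of g gs] by (simp add: algebra_simps)
qed

end

theorem theorem4:
  fixes n :: nat and S W :: "real set"
    and f :: "real \<Rightarrow> (real \<Rightarrow> real) \<Rightarrow> real \<Rightarrow> real"
    and P0 PW :: "real list pmf" and q \<gamma> cmax \<epsilon> :: real
    and h :: "((real \<Rightarrow> real) \<Rightarrow> real) \<Rightarrow> (real \<Rightarrow> real)"
    and c :: "(real \<Rightarrow> real) \<Rightarrow> (real \<Rightarrow> real) \<Rightarrow> nat \<Rightarrow> real"
    and k :: nat and mstar :: "real \<Rightarrow> real"
    and V :: "(real \<Rightarrow> real) \<Rightarrow> nat \<Rightarrow> real"
    and gs :: strategy
  assumes n_pos: "n \<ge> 1"
    and S_fin: "finite S" "S \<noteq> {}"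
    and W_fin: "finite W" "W \<noteq> {}"
    and f_range: "\<And>s m w. s \<in> S \<Longrightarrow> m \<in> Mset n S \<Longrightarrow> w \<in> W \<Longrightarrow> f s m w \<in> S"
    and P0_supp: "set_pmf P0 \<subseteq> {s. length s = n \<and> set s \<subseteq> S}"
    and PW_supp: "set_pmf PW \<subseteq> {w. length w = n \<and> set w \<subseteq> W}"
    and exchangeable: "\<And>\<pi>. \<pi> permutes {..<n} \<Longrightarrow>
                         map_pmf (\<lambda>w. map (\<lambda>i. w ! \<pi> i) [0..<n]) PW = PW"
    and q_range: "0 \<le> q" "q \<le> 1"
    and gamma_range: "0 < \<gamma>" "\<gamma> < 1"
    and h_range: "\<And>b. is_belief n S b \<Longrightarrow> h b \<in> Mset n S"
    and c_nonneg: "\<And>m m' a. m \<in> Mset n S \<Longrightarrow> m' \<in> Mset n S \<Longrightarrow> a \<in> {0, 1} \<Longrightarrow> 0 \<le> c m m' a"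
    and c_bound: "\<And>m m' a. m \<in> Mset n S \<Longrightarrow> m' \<in> Mset n S \<Longrightarrow> a \<in> {0, 1} \<Longrightarrow> c m m' a \<le> cmax"
    and eps_pos: "\<epsilon> > 0"
    and k_def: "real k \<ge> ln ((1 - \<gamma>) * \<epsilon> / (2 * cmax)) / ln \<gamma>"
    and mstar_in: "mstar \<in> Mset n S"
    and V_sol: "\<And>x y. x \<in> Mset n S \<Longrightarrow> y \<le> k \<Longrightarrow>
                  V x y = min (V0 n S f PW h c \<gamma> k mstar V x y) (V1 n S f PW h c \<gamma> q k mstar V x y)"
    and gs_strat: "gs \<in> strategies"
    and gs_rule: "\<And>t os as. yof os \<le> k \<Longrightarrow>
                  gs t os as = (if V0 n S f PW h c \<gamma> k mstar V (xof os) (yof os)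
                                   \<le> V1 n S f PW h c \<gamma> q k mstar V (xof os) (yof os) then 0 else 1)"
  shows "\<forall>g\<in>strategies. Jcost n f P0 PW q h c \<gamma> gs \<le> Jcost n f P0 PW q h c \<gamma> g + \<epsilon>"
proof -
  interpret dp n S W f P0 PW q h c \<gamma> cmax k mstar V
    by unfold_locales (use assms in auto)
  have Bk: "cmax / (1 - \<gamma>) * \<gamma> ^ k \<le> \<epsilon>"
  proof (cases "cmax = 0")
    case True then show ?thesis using eps_pos by simp
  next
    case False
    then have cpos: "cmax > 0" using cmax_nonneg by simp
    define a where "a = (1 - \<gamma>) * \<epsilon> / (2 * cmax)"
    have apos: "a > 0" unfolding a_def using cpos eps_pos gamma_range by simp
    have lg: "ln \<gamma> < 0" using gamma_range by simp
    have "real k * ln \<gamma> \<le> ln a"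
      using k_def lg unfolding a_def by (simp add: neg_divide_le_eq)
    then have "exp (real k * ln \<gamma>) \<le> exp (ln a)" by simp
    moreover have "exp (real k * ln \<gamma>) = \<gamma> ^ k"
      using gamma_range by (simp add: ln_realpow[symmetric])
    ultimately have gk: "\<gamma> ^ k \<le> a" using apos by simp
    have "cmax / (1 - \<gamma>) * \<gamma> ^ k \<le> cmax / (1 - \<gamma>) * a"
      using gk cpos gamma_range by (intro mult_left_mono) auto
    also have "\<dots> = \<epsilon> / 2" unfolding a_def using cpos gamma_range by (simp add: field_simps)
    finally have "cmax / (1 - \<gamma>) * \<gamma> ^ k \<le> \<epsilon> / 2" .
    then show ?thesis using eps_pos by linarith
  qed
  show ?thesis
  proof
    fix g assume g: "g \<in> strategies"
    have "Jcost n f P0 PW q h c \<gamma> gs \<le> Jcost n f P0 PW q h c \<gamma> g + cmax / (1 - \<gamma>) * \<gamma> ^ k"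
      by (rule main_dp[OF gs_strat gs_rule g])
    then show "Jcost n f P0 PW q h c \<gamma> gs \<le> Jcost n f P0 PW q h c \<gamma> g + \<epsilon>" using Bk by simp
  qed
qed

end
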